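(* (Spinless case.) Let $1\le M\le N$ be integers and let $G$ be the $M\times N$ grid graph (the interaction graph of the spinless $M\times N$ Fermi–Hubbard model). Then $d_{\mathrm{swap}}(G)=M-1$, and moreover there exists a swap network for $G$ with swap depth $M-1$ whose number of interaction layers equals the minimum number of interaction layers over all swap networks for $G$. (Spin case.) Let $2\le M\le N$ be integers and let $G'$ be the $2\times M\times N$ grid graph (the interaction graph of the $M\times N$ Fermi–Hubbard model with spin). Then $d_{\mathrm{swap}}(G')=2M-1$, and there exists a swap network for $G'$ with swap depth $2M-1$ and six interaction layers.
   Context: Grid graphs: the $M\times N$ grid graph has vertex set $\{(m,n): 0\le m<M,\ 0\le n<N\}$ with edges joining $(m,n),(m+1,n)$ and $(m,n),(m,n+1)$ whenever both endpoints exist; more generally the $M_1\times\cdots\times M_k$ grid graph is the Cartesian product of paths with $M_1,\ldots,M_k$ vertices (vertices are integer tuples with $0\le x_i<M_i$, adjacent iff they differ by $1$ in exactly one coordinate). Linear-connectivity swap network model: for a graph $G=(V,E)$ with $|V|=n$, qubits occupy positions $0,\ldots,n-1$ on a line; a configuration is a bijection $\pi:V\to\{0,\ldots,n-1\}$; a swap layer is a set of pairwise disjoint pairs of adjacent positions $\{i,i+1\}$, and applying it exchanges the vertices at the two positions of each pair. A swap network for $G$ consists of an initial configuration $\pi_0$ (chosen freely), swap layers $L_1,\ldots,L_d$ producing configurations $\pi_0,\ldots,\pi_d$, and a sequence of interaction layers, each attached to some configuration $\pi_t$ (several may be attached to the same configuration); an interaction layer at $\pi_t$ is a set of pairwise disjoint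 edges $\{v,w\}\in E$ with $|\pi_t(v)-\pi_t(w)|=1$. Every edge of $G$ must belong to some interaction layer. The swap depth is $d$; the number of interaction layers is the interaction depth. $d_{\mathrm{swap}}(G)$ is the minimum swap depth over all swap networks for $G$. *)

theory Defs
  imports Main
begin

definition grid2_V :: "nat \<Rightarrow> nat \<Rightarrow> (nat \<times> nat) set" where
  "grid2_V M N = {(m, n). m < M \<and> n < N}"

definition grid2_E :: "nat \<Rightarrow> nat \<Rightarrow> (nat \<times> nat) set set" where
  "grid2_E M N =
     {{(m, n), (m + 1, n)} | m n. m + 1 < M \<and> n < N} \<union>
     {{(m, n), (m, n + 1)} | m n. m < M \<and> n + 1 < N}"

definition grid3_V :: "nat \<Rightarrow> nat \<Rightarrow> nat \<Rightarrow> (nat \<times> nat \<times> nat) set" where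
  "grid3_V A M N = {(a, m, n). a < A \<and> m < M \<and> n < N}"

definition grid3_E :: "nat \<Rightarrow> nat \<Rightarrow> nat \<Rightarrow> (nat \<times> nat \<times> nat) set set" where
  "grid3_E A M N =
     {{(a, m, n), (a + 1, m, n)} | a m n. a + 1 < A \<and> m < M \<and> n < N} \<union>
     {{(a, m, n), (a, m + 1, n)} | a m n. a < A \<and> m + 1 < M \<and> n < N} \<union>
     {{(a, m, n), (a, m, n + 1)} | a m n. a < A \<and> m < M \<and> n + 1 < N}"

text \<open>A swap layer on n positions is represented by the set of left positions i of
  its pairs {i, i+1}; pairs must be disjoint and inside {0..<n}.\<close>

definition swap_layer :: "nat \<Rightarrow> nat set \<Rightarrow> bool" where
  "swap_layer n L \<longleftrightarrow> (\<forall>i\<in>L. i + 1 < n \<and> i + 1 \<notin> L)"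

definition swap_pos :: "nat set \<Rightarrow> nat \<Rightarrow> nat" where
  "swap_pos L p = (if p \<in> L then p + 1 else if 0 < p \<and> p - 1 \<in> L then p - 1 else p)"

definition config :: "('v \<Rightarrow> nat) \<Rightarrow> nat set list \<Rightarrow> nat \<Rightarrow> 'v \<Rightarrow> nat" where
  "config \<pi>0 Ls t = foldl (\<lambda>\<pi> L. swap_pos L \<circ> \<pi>) \<pi>0 (take t Ls)"

definition interaction_layer :: "'v set set \<Rightarrow> ('v \<Rightarrow> nat) \<Rightarrow> 'v set set \<Rightarrow> bool" where
  "interaction_layer E \<pi> I \<longleftrightarrow>
     I \<subseteq> E \<and>
     (\<forall>e\<in>I. \<forall>e'\<in>I. e \<noteq> e' \<longrightarrow> e \<inter> e' = {}) \<and>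
     (\<forall>e\<in>I. \<exists>v w. e = {v, w} \<and> (\<pi> v + 1 = \<pi> w \<or> \<pi> w + 1 = \<pi> v))"

text \<open>A swap network: initial configuration, list of swap layers (swap depth = length),
  and list of interaction layers, each attached to a configuration index t \<le> depth
  (interaction depth = length).\<close>
definition swap_network ::
  "'v set \<Rightarrow> 'v set set \<Rightarrow> ('v \<Rightarrow> nat) \<Rightarrow> nat set list \<Rightarrow> (nat \<times> 'v set set) list \<Rightarrow> bool" where
  "swap_network V E \<pi>0 Ls Is \<longleftrightarrow>
     bij_betw \<pi>0 V {0..<card V} \<and>
     (\<forall>L\<in>set Ls. swap_layer (card V) L) \<and>
     (\<forall>(t, I)\<in>set Is. t \<le> length Ls \<and> interaction_layer E (config \<pi>0 Ls t) I) \<and>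
     (\<forall>e\<in>E. \<exists>(t, I)\<in>set Is. e \<in> I)"

definition d_swap :: "'v set \<Rightarrow> 'v set set \<Rightarrow> nat" where
  "d_swap V E = (LEAST d. \<exists>\<pi>0 Ls Is. swap_network V E \<pi>0 Ls Is \<and> length Ls = d)"

definition min_interaction_depth :: "'v set \<Rightarrow> 'v set set \<Rightarrow> nat" where
  "min_interaction_depth V E = (LEAST k. \<exists>\<pi>0 Ls Is. swap_network V E \<pi>0 Ls Is \<and> length Is = k)"

end

theory Submission
  imports Defs
begin

definition adjc :: "('v \<Rightarrow> nat) \<Rightarrow> 'v \<Rightarrow> 'v \<Rightarrow> bool" where
  "adjc c v w \<longleftrightarrow> c v + 1 = c w \<or> c w + 1 = c v"

lemma swap_pos_inv:
  assumes "\<forall>i\<in>L. i + 1 \<notin> L" shows "swap_pos L (swap_pos L p) = p"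
  using assms unfolding swap_pos_def by auto

lemma swap_pos_lt: "swap_layer n L \<Longrightarrow> p < n \<Longrightarrow> swap_pos L p < n"
  unfolding swap_pos_def swap_layer_def by auto

lemma swap_pos_le1: "swap_pos L p \<le> p + 1"
  unfolding swap_pos_def by auto

lemma swap_pos_le2: "p \<le> swap_pos L p + 1"
  unfolding swap_pos_def by auto

lemma swap_pos_bij: "swap_layer n L \<Longrightarrow> bij_betw (swap_pos L) {0..<n} {0..<n}"
  apply (rule bij_betw_byWitness[where f'="swap_pos L"])
  using swap_pos_inv[of L] swap_pos_lt[of n L] unfolding swap_layer_def by auto

lemma foldl_bij:
  "\<forall>L\<in>set xs. swap_layer n L \<Longrightarrow> bij_betw \<pi> V {0..<n} \<Longrightarrow>
   bij_betw (foldl (\<lambda>\<pi> L. swap_pos L \<circ> \<pi>) \<pi> xs) V {0..<n}"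
proof (induction xs arbitrary: \<pi>)
  case Nil then show ?case by simp
next
  case (Cons L xs)
  have b: "bij_betw (swap_pos L \<circ> \<pi>) V {0..<n}"
    using Cons.prems swap_pos_bij[of n L] by (auto intro: bij_betw_trans)
  have "bij_betw (foldl (\<lambda>\<pi> L. swap_pos L \<circ> \<pi>) (swap_pos L \<circ> \<pi>) xs) V {0..<n}"
    apply (rule Cons.IH) using Cons.prems b by (auto simp: comp_def)
  then show ?case by (simp only: foldl_Cons)
qed

lemma foldl_inv:
  "\<forall>L\<in>set xs. \<forall>i\<in>L. i + 1 \<notin> L \<Longrightarrow>
   foldl (\<lambda>\<pi> L. swap_pos L \<circ> \<pi>) (foldl (\<lambda>\<pi> L. swap_pos L \<circ> \<pi>) x (rev xs)) xs = x"
proof (induction xs arbitrary: x)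
  case Nil then show ?case by simp
next
  case (Cons L xs)
  have "swap_pos L (swap_pos L p) = p" for p
    using swap_pos_inv[of L] Cons.prems by auto
  then show ?case using Cons by simp
qed

lemma config_0[simp]: "config \<pi>0 Ls 0 = \<pi>0"
  by (simp add: config_def)

lemma config_Suc: "t < length Ls \<Longrightarrow> config \<pi>0 Ls (Suc t) = swap_pos (Ls!t) \<circ> config \<pi>0 Ls t"
  by (simp add: config_def take_Suc_conv_app_nth)

lemma config_bij:
  assumes "\<forall>L\<in>set Ls. swap_layer n L" "bij_betw \<pi>0 V {0..<n}"
  shows "bij_betw (config \<pi>0 Ls t) V {0..<n}"
  unfolding config_def
  using foldl_bij[of "take t Ls" n \<pi>0 V] assms set_take_subset[of t Ls] by blast

lemma net_bij:
  assumes "swap_network V E \<pi>0 Ls Is"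
  shows "bij_betw (config \<pi>0 Ls t) V {0..<card V}"
  using assms config_bij unfolding swap_network_def by blast

lemma config_step1:
  "t < length Ls \<Longrightarrow> config \<pi>0 Ls (Suc t) v \<le> config \<pi>0 Ls t v + 1"
  using swap_pos_le1[of "Ls!t" "config \<pi>0 Ls t v"] by (simp add: config_Suc)

lemma config_step2:
  "t < length Ls \<Longrightarrow> config \<pi>0 Ls t v \<le> config \<pi>0 Ls (Suc t) v + 1"
  using swap_pos_le2[of "config \<pi>0 Ls t v" "Ls!t"] by (simp add: config_Suc)

lemma crossing:
  assumes net: "swap_network V E \<pi>0 Ls Is" and vV: "v \<in> V" and wV: "w \<in> V"
    and init: "\<pi>0 v < \<pi>0 w"
  shows "t \<le> length Ls \<Longrightarrow> config \<pi>0 Ls t w < config \<pi>0 Ls t v \<Longrightarrow>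
         \<exists>s<t. adjc (config \<pi>0 Ls s) v w"
proof (induction t)
  case 0 then show ?case using init by simp
next
  case (Suc t)
  let ?c = "config \<pi>0 Ls"
  have inj: "inj_on (?c s) V" for s using net_bij[OF net] bij_betw_def by blast
  have ne: "?c t v \<noteq> ?c t w"
  proof
    assume "?c t v = ?c t w" then have "v = w" using inj[of t] vV wV inj_on_def by metis
    then show False using init by simp
  qed
  show ?case
  proof (cases "?c t w < ?c t v")
    case True then show ?thesis using Suc by (auto intro: less_SucI)
  next
    case False
    then have lt: "?c t v < ?c t w" using ne by simp
    have "?c (Suc t) v \<le> ?c t v + 1" "?c t w \<le> ?c (Suc t) w + 1"
      using config_step1[of t Ls] config_step2[of t Ls] Suc.prems by auto
    then have "?c t v + 1 = ?c t w" using lt Suc.prems by linarith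
    then show ?thesis unfolding adjc_def by auto
  qed
qed

lemma net_inj:
  assumes "swap_network V E \<pi>0 Ls Is" "v \<in> V" "w \<in> V" "config \<pi>0 Ls t v = config \<pi>0 Ls t w"
  shows "v = w"
  using net_bij[OF assms(1), of t] assms(2-4) unfolding bij_betw_def inj_on_def by blast

lemma touchers:
  assumes net: "swap_network V E \<pi>0 Ls Is" and fin: "finite V"
  shows "t \<le> length Ls \<Longrightarrow>
    card {v \<in> V. \<pi>0 v < k \<and> (\<exists>s\<le>t. \<exists>w\<in>V. \<not> \<pi>0 w < k \<and> adjc (config \<pi>0 Ls s) v w)} \<le> t + 1"
proof (induction t)
  let ?c = "config \<pi>0 Ls"
  {
  case 0
  let ?T = "{v \<in> V. \<pi>0 v < k \<and> (\<exists>s\<le>0. \<exists>w\<in>V. \<not> \<pi>0 w < k \<and> adjc (config \<pi>0 Ls s) v w)}"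
  have "\<forall>a\<in>?T. \<forall>b\<in>?T. a = b"
  proof (intro ballI)
    fix a b assume a: "a \<in> ?T" and b: "b \<in> ?T"
    have "\<pi>0 a + 1 = k" using a unfolding adjc_def by auto
    moreover have "\<pi>0 b + 1 = k" using b unfolding adjc_def by auto
    ultimately show "a = b" using net_inj[OF net, of a b 0] a b by simp
  qed
  then show ?case using fin by (simp add: card_le_Suc0_iff_eq)
  }
next
  let ?c = "config \<pi>0 Ls"
  case (Suc t)
  define B where "B = {w \<in> V. \<not> \<pi>0 w < k}"
  define T where "T = (\<lambda>t. {v \<in> V. \<pi>0 v < k \<and> (\<exists>s\<le>t. \<exists>w\<in>B. adjc (?c s) v w)})"
  define New where "New = {v \<in> V. \<pi>0 v < k \<and> v \<notin> T t \<and> (\<exists>w\<in>B. adjc (?c (Suc t)) v w)}"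
  have Teq: "T (Suc t) = T t \<union> New"
    unfolding T_def New_def by (auto simp: le_Suc_eq)
  have finT: "finite (T t)" "finite New" using fin unfolding T_def New_def by auto
  have Tt: "T s = {v \<in> V. \<pi>0 v < k \<and> (\<exists>s'\<le>s. \<exists>w\<in>V. \<not> \<pi>0 w < k \<and> adjc (?c s') v w)}" for s
    unfolding T_def B_def by blast
  have IH: "card (T t) \<le> t + 1" using Suc unfolding Tt by simp
  have New1: "card New \<le> 1"
  proof (cases "B = {}")
    case True then show ?thesis unfolding New_def by simp
  next
    case Bne: False
    define l where "l = (\<lambda>s. Min (?c s ` B))"
    have finB: "finite B" using fin unfolding B_def by simp
    have lle: "w \<in> B \<Longrightarrow> l s \<le> ?c s w" for w s unfolding l_def using finB by simp
    have lin: "\<exists>w\<in>B. ?c s w = l s" for s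
    proof -
      have "l s \<in> ?c s ` B" unfolding l_def using finB Bne by (intro Min_in) auto
      then show ?thesis by auto
    qed
    have tlt: "t < length Ls" using Suc by simp
    have a: "?c t v + 2 \<le> l t" if v: "v \<in> V" "\<pi>0 v < k" "v \<notin> T t" for v
    proof -
      obtain w where w: "w \<in> B" "?c t w = l t" using lin by blast
      have wV: "w \<in> V" "\<not> \<pi>0 w < k" using w B_def by auto
      have "v \<noteq> w" using v wV by auto
      then have ne: "?c t v \<noteq> ?c t w" using net_inj[OF net, of v w t] v wV by blast
      have "\<not> ?c t v + 1 = l t"
      proof
        assume "?c t v + 1 = l t"
        then have "adjc (?c t) v w" using w unfolding adjc_def by simp
        then have "v \<in> T t" using v w unfolding T_def by auto
        then show False using v by simp
      qed
      moreover have "\<not> ?c t w < ?c t v"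
      proof
        assume "?c t w < ?c t v"
        then obtain s where "s < t" "adjc (?c s) v w"
          using crossing[OF net v(1) wV(1), of t] v wV tlt by auto
        then have "v \<in> T t" using v w unfolding T_def by auto
        then show False using v by simp
      qed
      ultimately show ?thesis using ne w by linarith
    qed
    have c1: "?c (Suc t) v \<le> ?c t v + 1" "?c t v \<le> ?c (Suc t) v + 1" for v
      using config_step1[OF tlt] config_step2[OF tlt] by auto
    have lstep: "l t \<le> l (Suc t) + 1"
    proof -
      obtain w where w: "w \<in> B" "?c (Suc t) w = l (Suc t)" using lin by blast
      show ?thesis using lle[OF w(1), of t] c1[of w] w by linarith
    qed
    have b: "l (Suc t) \<le> ?c (Suc t) v + 1 \<and> ?c (Suc t) v + 1 \<le> l t" if v: "v \<in> New" for v
    proof -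
      obtain w where w: "w \<in> B" "adjc (?c (Suc t)) v w" using v New_def by auto
      have "l (Suc t) \<le> ?c (Suc t) w" using lle w by simp
      then have 1: "l (Suc t) \<le> ?c (Suc t) v + 1" using w(2) unfolding adjc_def by auto
      have "?c t v + 2 \<le> l t" using a v New_def by auto
      then show ?thesis using 1 c1[of v] by linarith
    qed
    have "\<forall>x\<in>New. \<forall>y\<in>New. x = y"
    proof (intro ballI, rule ccontr)
      fix x y assume x: "x \<in> New" and y: "y \<in> New" and xy: "x \<noteq> y"
      have xyV: "x \<in> V" "y \<in> V" "\<pi>0 x < k" "\<pi>0 y < k" using x y New_def by auto
      have ne: "?c (Suc t) x \<noteq> ?c (Suc t) y" using net_inj[OF net, of x y "Suc t"] xyV xy by blast
      obtain w where w: "w \<in> B" "?c (Suc t) w = l (Suc t)" using lin by blast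
      have wV: "w \<in> V" "\<not> \<pi>0 w < k" using w B_def by auto
      have "?c (Suc t) w \<noteq> ?c (Suc t) x" "?c (Suc t) w \<noteq> ?c (Suc t) y"
        using net_inj[OF net, of w x "Suc t"] net_inj[OF net, of w y "Suc t"] xyV wV by auto
      then show False using b[OF x] b[OF y] lstep w ne by linarith
    qed
    then show ?thesis using finT by (simp add: card_le_Suc0_iff_eq)
  qed
  have "card (T (Suc t)) \<le> card (T t) + card New" unfolding Teq using card_Un_le by blast
  then have "card (T (Suc t)) \<le> Suc t + 1" using IH New1 by linarith
  then show ?case by (simp only: Tt)
qed

lemma net_cover: "swap_network V E \<pi>0 Ls Is \<Longrightarrow> e \<in> E \<Longrightarrow> \<exists>(t, I)\<in>set Is. e \<in> I"
  unfolding swap_network_def by simp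

lemma net_layer: "swap_network V E \<pi>0 Ls Is \<Longrightarrow> (t, I) \<in> set Is \<Longrightarrow>
    t \<le> length Ls \<and> interaction_layer E (config \<pi>0 Ls t) I"
  unfolding swap_network_def by fast

lemma il_adj: "interaction_layer E c I \<Longrightarrow> e \<in> I \<Longrightarrow>
   \<exists>v w. e = {v, w} \<and> (c v + 1 = c w \<or> c w + 1 = c v)"
  unfolding interaction_layer_def by simp

lemma il_disj: "interaction_layer E c I \<Longrightarrow> e \<in> I \<Longrightarrow> e' \<in> I \<Longrightarrow> e \<noteq> e' \<Longrightarrow> e \<inter> e' = {}"
  unfolding interaction_layer_def by simp

lemma lower_bound:
  assumes net: "swap_network V E \<pi>0 Ls Is" and fin: "finite V"
  shows "card {v \<in> V. \<pi>0 v < k \<and> (\<exists>w\<in>V. {v, w} \<in> E \<and> \<not> \<pi>0 w < k)} \<le> length Ls + 1"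
proof -
  let ?T = "{v \<in> V. \<pi>0 v < k \<and> (\<exists>s\<le>length Ls. \<exists>w\<in>V. \<not> \<pi>0 w < k \<and> adjc (config \<pi>0 Ls s) v w)}"
  have "{v \<in> V. \<pi>0 v < k \<and> (\<exists>w\<in>V. {v, w} \<in> E \<and> \<not> \<pi>0 w < k)} \<subseteq> ?T"
  proof (rule subsetI)
    fix v assume "v \<in> {v \<in> V. \<pi>0 v < k \<and> (\<exists>w\<in>V. {v, w} \<in> E \<and> \<not> \<pi>0 w < k)}"
    then obtain w where v: "v \<in> V" "\<pi>0 v < k" and w: "w \<in> V" "{v, w} \<in> E" "\<not> \<pi>0 w < k" by blast
    have "\<exists>(t, I)\<in>set Is. {v, w} \<in> I" using net_cover[OF net w(2)] .
    then obtain t I where tI: "(t, I) \<in> set Is" "{v, w} \<in> I" by blast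
    have "t \<le> length Ls" "interaction_layer E (config \<pi>0 Ls t) I"
      using net_layer[OF net tI(1)] by auto
    then obtain a b where "{v, w} = {a, b}" "config \<pi>0 Ls t a + 1 = config \<pi>0 Ls t b \<or> config \<pi>0 Ls t b + 1 = config \<pi>0 Ls t a"
      using il_adj[OF _ tI(2)] by metis
    then have "adjc (config \<pi>0 Ls t) v w" unfolding adjc_def by (auto simp: doubleton_eq_iff)
    then show "v \<in> ?T"
      using \<open>t \<le> length Ls\<close> w v by blast
  qed
  moreover have "finite ?T" using fin by simp
  ultimately have "card {v \<in> V. \<pi>0 v < k \<and> (\<exists>w\<in>V. {v, w} \<in> E \<and> \<not> \<pi>0 w < k)} \<le> card ?T"
    by (rule card_mono[rotated])
  moreover have "card ?T \<le> length Ls + 1" by (rule touchers[OF net fin]) simp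
  ultimately show ?thesis by linarith
qed

lemma degree_bound:
  assumes net: "swap_network V E \<pi>0 Ls Is" and F: "F \<subseteq> E" "finite F" and x: "\<forall>e\<in>F. x \<in> e"
  shows "card F \<le> length Is"
proof -
  have ex: "\<exists>i<length Is. e \<in> snd (Is ! i)" if eF: "e \<in> F" for e
  proof -
    have "e \<in> E" using eF F by blast
    then have "\<exists>(t, I)\<in>set Is. e \<in> I" by (rule net_cover[OF net])
    then obtain t I where tI: "(t, I) \<in> set Is" "e \<in> I" by blast
    then obtain i where "i < length Is" "Is ! i = (t, I)" by (meson in_set_conv_nth)
    then show ?thesis using tI by auto
  qed
  define g where "g = (\<lambda>e. SOME i. i < length Is \<and> e \<in> snd (Is ! i))"
  have g: "g e < length Is \<and> e \<in> snd (Is ! g e)" if "e \<in> F" for e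
    unfolding g_def using someI_ex[OF ex[OF that]] .
  have "inj_on g F"
  proof (rule inj_onI, rule ccontr)
    fix e e' assume e: "e \<in> F" "e' \<in> F" "g e = g e'" "e \<noteq> e'"
    obtain t I where tI: "Is ! g e = (t, I)" by (cases "Is ! g e")
    have "(t, I) \<in> set Is" using g[OF e(1)] tI nth_mem by metis
    then have il: "interaction_layer E (config \<pi>0 Ls t) I" using net_layer[OF net] by blast
    have "e \<in> I" "e' \<in> I" using g[OF e(1)] g[OF e(2)] tI e(3) by auto
    then have "e \<inter> e' = {}" using il_disj[OF il] e(4) by blast
    then show False using x e by blast
  qed
  moreover have "g ` F \<subseteq> {..<length Is}" using g by auto
  ultimately show ?thesis using card_inj_on_le[of g F "{..<length Is}"] by simp
qed

lemma ivt_nat: "P a \<Longrightarrow> \<not> P b \<Longrightarrow> a < b \<Longrightarrow> \<exists>i. a \<le> i \<and> i < b \<and> P i \<and> \<not> P (Suc i)"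
proof (induction b)
  case 0 then show ?case by simp
next
  case (Suc b)
  show ?case
  proof (cases "P b")
    case True then show ?thesis using Suc.prems by (intro exI[of _ b]) auto
  next
    case False
    then have "a < b" using Suc.prems by (metis less_SucE)
    then show ?thesis using Suc.IH Suc.prems False by (meson less_SucI)
  qed
qed

lemma line_boundary:
  assumes "P a" "\<not> P b" "a < N" "b < N"
  shows "\<exists>i. Suc i < N \<and> ((P i \<and> \<not> P (Suc i)) \<or> (\<not> P i \<and> P (Suc i)))"
proof (cases "a < b")
  case True
  then obtain i where "a \<le> i" "i < b" "P i" "\<not> P (Suc i)" using ivt_nat[of P a b] assms by blast
  then show ?thesis using assms by (intro exI[of _ i]) auto
next
  case False
  then have "b < a" using assms by (metis linorder_neqE_nat)
  then obtain i where "b \<le> i" "i < a" "\<not> P i" "P (Suc i)" using ivt_nat[of "\<lambda>x. \<not> P x" b a] assms by blast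
  then show ?thesis using assms by (intro exI[of _ i]) auto
qed

lemma count_keys:
  assumes "finite B" "\<forall>i<M. \<exists>v\<in>B. key v = i"
  shows "M \<le> card B"
proof -
  have "{0..<M} \<subseteq> key ` B" using assms(2) by force
  then have "card {0..<M} \<le> card (key ` B)" using assms(1) by (intro card_mono) auto
  then show ?thesis using card_image_le[OF assms(1), of key] by simp
qed

lemma count_keys2:
  assumes "finite B" "\<forall>a<(2::nat). \<forall>i<M. \<exists>v\<in>B. key v = (a, i)"
  shows "2 * M \<le> card B"
proof -
  have "{0..<2} \<times> {0..<M} \<subseteq> key ` B" using assms(2) by force
  then have "card ({0..<2::nat} \<times> {0..<M}) \<le> card (key ` B)" using assms(1) by (intro card_mono) auto
  then show ?thesis using card_image_le[OF assms(1), of key] by (simp add: card_cartesian_product)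
qed

definition bd :: "'v set \<Rightarrow> 'v set set \<Rightarrow> ('v \<Rightarrow> nat) \<Rightarrow> nat \<Rightarrow> 'v set" where
  "bd V E f k = {v \<in> V. f v < k \<and> (\<exists>w\<in>V. {v, w} \<in> E \<and> \<not> f w < k)}"

lemma grid2_E_h: "m < M \<Longrightarrow> Suc n < N \<Longrightarrow> {(m, n), (m, Suc n)} \<in> grid2_E M N"
  unfolding grid2_E_def by auto
lemma grid2_E_v: "Suc m < M \<Longrightarrow> n < N \<Longrightarrow> {(m, n), (Suc m, n)} \<in> grid2_E M N"
  unfolding grid2_E_def by auto
lemma grid2_V_iff[simp]: "(m, n) \<in> grid2_V M N \<longleftrightarrow> m < M \<and> n < N"
  unfolding grid2_V_def by auto
lemma grid2_V_fin: "finite (grid2_V M N)"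
proof -
  have "grid2_V M N = {0..<M} \<times> {0..<N}" unfolding grid2_V_def by auto
  then show ?thesis by simp
qed
lemma grid2_V_card: "card (grid2_V M N) = M * N"
proof -
  have "grid2_V M N = {0..<M} \<times> {0..<N}" unfolding grid2_V_def by auto
  then show ?thesis by (simp add: card_cartesian_product)
qed

lemma row_bd2:
  assumes "m < M" "n1 < N" "n2 < N" "f (m, n1) < k" "\<not> f (m, n2) < k"
  shows "\<exists>n. (m, n) \<in> bd (grid2_V M N) (grid2_E M N) f k"
proof -
  obtain i where i: "Suc i < N" "(f (m, i) < k \<and> \<not> f (m, Suc i) < k) \<or> (\<not> f (m, i) < k \<and> f (m, Suc i) < k)"
    using line_boundary[of "\<lambda>n. f (m, n) < k" n1 n2 N] assms by blast
  have e: "{(m, i), (m, Suc i)} \<in> grid2_E M N" "{(m, Suc i), (m, i)} \<in> grid2_E M N"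
    using grid2_E_h[OF assms(1) i(1)] by (auto simp: insert_commute)
  show ?thesis
  proof (rule disjE[OF i(2)])
    assume h: "f (m, i) < k \<and> \<not> f (m, Suc i) < k"
    have "(m, i) \<in> bd (grid2_V M N) (grid2_E M N) f k"
      unfolding bd_def using h e i(1) assms(1) by (auto intro!: bexI[of _ "(m, Suc i)"])
    then show ?thesis by blast
  next
    assume h: "\<not> f (m, i) < k \<and> f (m, Suc i) < k"
    have "(m, Suc i) \<in> bd (grid2_V M N) (grid2_E M N) f k"
      unfolding bd_def using h e i(1) assms(1) by (auto intro!: bexI[of _ "(m, i)"])
    then show ?thesis by blast
  qed
qed

lemma col_bd2:
  assumes "n < N" "m1 < M" "m2 < M" "f (m1, n) < k" "\<not> f (m2, n) < k"
  shows "\<exists>m. (m, n) \<in> bd (grid2_V M N) (grid2_E M N) f k"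
proof -
  obtain i where i: "Suc i < M" "(f (i, n) < k \<and> \<not> f (Suc i, n) < k) \<or> (\<not> f (i, n) < k \<and> f (Suc i, n) < k)"
    using line_boundary[of "\<lambda>m. f (m, n) < k" m1 m2 M] assms by blast
  have e: "{(i, n), (Suc i, n)} \<in> grid2_E M N" "{(Suc i, n), (i, n)} \<in> grid2_E M N"
    using grid2_E_v[OF i(1) assms(1)] by (auto simp: insert_commute)
  show ?thesis
  proof (rule disjE[OF i(2)])
    assume h: "f (i, n) < k \<and> \<not> f (Suc i, n) < k"
    have "(i, n) \<in> bd (grid2_V M N) (grid2_E M N) f k"
      unfolding bd_def using h e i(1) assms(1) by (auto intro!: bexI[of _ "(Suc i, n)"])
    then show ?thesis by blast
  next
    assume h: "\<not> f (i, n) < k \<and> f (Suc i, n) < k"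
    have "(Suc i, n) \<in> bd (grid2_V M N) (grid2_E M N) f k"
      unfolding bd_def using h e i(1) assms(1) by (auto intro!: bexI[of _ "(i, n)"])
    then show ?thesis by blast
  qed
qed

lemma iso2:
  assumes M: "2 \<le> M" "M \<le> N" and f: "bij_betw f (grid2_V M N) {0..<card (grid2_V M N)}"
  shows "\<exists>k. M \<le> card (bd (grid2_V M N) (grid2_E M N) f k)"
proof -
  let ?V = "grid2_V M N" and ?B = "bd (grid2_V M N) (grid2_E M N) f"
  have finB: "finite (?B k)" for k using grid2_V_fin unfolding bd_def by simp
  have flt: "m < M \<Longrightarrow> n < N \<Longrightarrow> f (m, n) < M * N" for m n
    using f grid2_V_card unfolding bij_betw_def by fastforce
  have finj: "m < M \<Longrightarrow> n < N \<Longrightarrow> m' < M \<Longrightarrow> n' < N \<Longrightarrow> f (m, n) = f (m', n') \<Longrightarrow> m = m' \<and> n = n'"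
    for m n m' n' using f unfolding bij_betw_def inj_on_def by (metis grid2_V_iff prod.inject)
  define Q where "Q = (\<lambda>k. (\<exists>m<M. \<forall>n<N. f (m, n) < k) \<or> (\<exists>n<N. \<forall>m<M. f (m, n) < k))"
  have QMN: "Q (M * N)" unfolding Q_def using flt M by (intro disjI1 exI[of _ 0]) auto
  define k0 where "k0 = (LEAST k. Q k)"
  have Qk0: "Q k0" unfolding k0_def using QMN by (rule LeastI)
  have k0pos: "k0 \<noteq> 0"
  proof
    assume "k0 = 0"
    then show False using Qk0 M unfolding Q_def by (auto dest: spec[of _ 0])
  qed
  define k' where "k' = k0 - 1"
  have nQ: "\<not> Q k'" unfolding k'_def k0_def using not_less_Least[of "k0 - 1" Q] k0pos k0_def by auto
  have k0k': "k0 = Suc k'" using k0pos unfolding k'_def by simp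
  show ?thesis
  proof (cases "\<exists>m<M. \<forall>n<N. f (m, n) < k0")
    case False
    then obtain n1 where n1: "n1 < N" "\<forall>m<M. f (m, n1) < k0" using Qk0 unfolding Q_def by blast
    have "\<forall>i<M. \<exists>v\<in>?B k0. fst v = i"
    proof (intro allI impI)
      fix m assume m: "m < M"
      obtain n2 where "n2 < N" "\<not> f (m, n2) < k0" using False m by blast
      then obtain n where "(m, n) \<in> ?B k0" using row_bd2[of m M n1 N n2 f k0] n1 m by blast
      then show "\<exists>v\<in>?B k0. fst v = m" by force
    qed
    then show ?thesis using count_keys[OF finB] by blast
  next
    case True
    then obtain m1 where m1: "m1 < M" "\<forall>n<N. f (m1, n) < k0" by blast
    show ?thesis
    proof (cases "\<exists>n<N. \<forall>m<M. f (m, n) < k0")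
      case False
      have "\<forall>i<N. \<exists>v\<in>?B k0. snd v = i"
      proof (intro allI impI)
        fix n assume n: "n < N"
        obtain m2 where "m2 < M" "\<not> f (m2, n) < k0" using False n by blast
        then obtain m where "(m, n) \<in> ?B k0" using col_bd2[of n N m1 M m2 f k0] m1 n by blast
        then show "\<exists>v\<in>?B k0. snd v = n" by force
      qed
      then have "N \<le> card (?B k0)" using count_keys[OF finB] by blast
      then show ?thesis using M by (intro exI[of _ k0]) linarith
    next
      case True
      then obtain n1 where n1: "n1 < N" "\<forall>m<M. f (m, n1) < k0" by blast
      obtain na where na: "na < N" "\<not> f (m1, na) < k'" using nQ m1 unfolding Q_def by blast
      obtain ma where ma: "ma < M" "\<not> f (ma, n1) < k'" using nQ n1 unfolding Q_def by blast
      have "f (m1, na) = k'" using na m1 k0k' by (metis less_Suc_eq)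
      moreover have "f (ma, n1) = k'" using ma n1 k0k' by (metis less_Suc_eq)
      ultimately have "m1 = ma \<and> na = n1" using finj[of m1 na ma n1] m1 na ma n1 by simp
      then have fv: "f (m1, n1) = k'" using \<open>f (m1, na) = k'\<close> by simp
      have "\<forall>i<M. \<exists>v\<in>?B k'. fst v = i"
      proof (intro allI impI)
        fix m assume m: "m < M"
        show "\<exists>v\<in>?B k'. fst v = m"
        proof (cases "m = m1")
          case False
          have "f (m, n1) \<noteq> k'" using finj[of m n1 m1 n1] fv m n1 m1 False by auto
          then have lt: "f (m, n1) < k'" using n1 m k0k' by (metis less_Suc_eq)
          obtain n2 where "n2 < N" "\<not> f (m, n2) < k'" using nQ m unfolding Q_def by blast
          then obtain n where "(m, n) \<in> ?B k'" using row_bd2[of m M n1 N n2 f k'] n1 m lt by blast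
          then show ?thesis by force
        next
          case True
          define n' where "n' = (if Suc n1 < N then Suc n1 else n1 - 1)"
          have n': "n' < N" "n' \<noteq> n1" using n1 M unfolding n'_def by auto
          have "f (m1, n') \<noteq> k'" using finj[of m1 n' m1 n1] fv n' n1 m1 by auto
          then have lt: "f (m1, n') < k'" using m1 n' k0k' by (metis less_Suc_eq)
          have "{(m1, n'), (m1, n1)} \<in> grid2_E M N"
          proof (cases "Suc n1 < N")
            case True then show ?thesis using grid2_E_h[OF m1(1) True] unfolding n'_def
              by (simp add: insert_commute)
          next
            case False
            then have "n1 = Suc n'" using n' n1 unfolding n'_def by auto
            then show ?thesis using grid2_E_h[OF m1(1), of n'] n1 by simp
          qed
          then have "(m1, n') \<in> ?B k'" unfolding bd_def using lt fv m1 n' n1 by auto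
          then show ?thesis using True by force
        qed
      qed
      then show ?thesis using count_keys[OF finB] by blast
    qed
  qed
qed

lemma grid3_E_n: "a < A \<Longrightarrow> m < M \<Longrightarrow> Suc n < N \<Longrightarrow> {(a, m, n), (a, m, Suc n)} \<in> grid3_E A M N"
  unfolding grid3_E_def by (intro UnI2 CollectI exI[of _ a] exI[of _ m] exI[of _ n]) simp
lemma grid3_E_m: "a < A \<Longrightarrow> Suc m < M \<Longrightarrow> n < N \<Longrightarrow> {(a, m, n), (a, Suc m, n)} \<in> grid3_E A M N"
  unfolding grid3_E_def by (intro UnI1 UnI2 CollectI exI[of _ a] exI[of _ m] exI[of _ n]) simp
lemma grid3_E_a: "Suc a < A \<Longrightarrow> m < M \<Longrightarrow> n < N \<Longrightarrow> {(a, m, n), (Suc a, m, n)} \<in> grid3_E A M N"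
  unfolding grid3_E_def by (intro UnI1 CollectI exI[of _ a] exI[of _ m] exI[of _ n]) simp
lemma grid3_V_iff[simp]: "(a, m, n) \<in> grid3_V A M N \<longleftrightarrow> a < A \<and> m < M \<and> n < N"
  unfolding grid3_V_def by auto
lemma grid3_V_eq: "grid3_V A M N = {0..<A} \<times> {0..<M} \<times> {0..<N}"
  unfolding grid3_V_def by auto
lemma grid3_V_fin: "finite (grid3_V A M N)"
  unfolding grid3_V_eq by simp
lemma grid3_V_card: "card (grid3_V A M N) = A * M * N"
  unfolding grid3_V_eq by (simp add: card_cartesian_product)

abbreviation "bd3 M N f k \<equiv> bd (grid3_V 2 M N) (grid3_E 2 M N) f k"

lemma rung_bd:
  assumes "a < 2" "m < M" "n < N" "f (a, m, n) < k" "\<not> f (1 - a, m, n) < k"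
  shows "(a, m, n) \<in> bd3 M N f k"
proof -
  have "{(a, m, n), (1 - a, m, n)} \<in> grid3_E 2 M N"
  proof (cases "a = 0")
    case True then show ?thesis using grid3_E_a[of 0 2 m M n N] assms by simp
  next
    case False then have "a = 1" using assms by simp
    then show ?thesis using grid3_E_a[of 0 2 m M n N] assms by (simp add: insert_commute)
  qed
  then show ?thesis unfolding bd_def using assms by (auto intro!: bexI[of _ "(1 - a, m, n)"])
qed

lemma lineN_bd3:
  assumes "a < 2" "m < M" "n1 < N" "n2 < N" "f (a, m, n1) < k" "\<not> f (a, m, n2) < k"
  shows "\<exists>n. (a, m, n) \<in> bd3 M N f k"
proof -
  obtain i where i: "Suc i < N" "(f (a, m, i) < k \<and> \<not> f (a, m, Suc i) < k) \<or> (\<not> f (a, m, i) < k \<and> f (a, m, Suc i) < k)"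
    using line_boundary[of "\<lambda>n. f (a, m, n) < k" n1 n2 N] assms by blast
  have e: "{(a, m, i), (a, m, Suc i)} \<in> grid3_E 2 M N" "{(a, m, Suc i), (a, m, i)} \<in> grid3_E 2 M N"
    using grid3_E_n[OF assms(1,2) i(1)] by (auto simp: insert_commute)
  show ?thesis
  proof (rule disjE[OF i(2)])
    assume h: "f (a, m, i) < k \<and> \<not> f (a, m, Suc i) < k"
    have "(a, m, i) \<in> bd3 M N f k"
      unfolding bd_def using h e i(1) assms(1,2) by (auto intro!: bexI[of _ "(a, m, Suc i)"])
    then show ?thesis by blast
  next
    assume h: "\<not> f (a, m, i) < k \<and> f (a, m, Suc i) < k"
    have "(a, m, Suc i) \<in> bd3 M N f k"
      unfolding bd_def using h e i(1) assms(1,2) by (auto intro!: bexI[of _ "(a, m, i)"])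
    then show ?thesis by blast
  qed
qed

lemma lineM_bd3:
  assumes "a < 2" "n < N" "m1 < M" "m2 < M" "f (a, m1, n) < k" "\<not> f (a, m2, n) < k"
  shows "\<exists>m. (a, m, n) \<in> bd3 M N f k"
proof -
  obtain i where i: "Suc i < M" "(f (a, i, n) < k \<and> \<not> f (a, Suc i, n) < k) \<or> (\<not> f (a, i, n) < k \<and> f (a, Suc i, n) < k)"
    using line_boundary[of "\<lambda>m. f (a, m, n) < k" m1 m2 M] assms by blast
  have e: "{(a, i, n), (a, Suc i, n)} \<in> grid3_E 2 M N" "{(a, Suc i, n), (a, i, n)} \<in> grid3_E 2 M N"
    using grid3_E_m[OF assms(1) i(1) assms(2)] by (auto simp: insert_commute)
  show ?thesis
  proof (rule disjE[OF i(2)])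
    assume h: "f (a, i, n) < k \<and> \<not> f (a, Suc i, n) < k"
    have "(a, i, n) \<in> bd3 M N f k"
      unfolding bd_def using h e i(1) assms(1,2) by (auto intro!: bexI[of _ "(a, Suc i, n)"])
    then show ?thesis by blast
  next
    assume h: "\<not> f (a, i, n) < k \<and> f (a, Suc i, n) < k"
    have "(a, Suc i, n) \<in> bd3 M N f k"
      unfolding bd_def using h e i(1) assms(1,2) by (auto intro!: bexI[of _ "(a, i, n)"])
    then show ?thesis by blast
  qed
qed

lemma fatrow_bd:
  assumes "m < M" "n1 < N" "\<forall>a<2. f (a, m, n1) < k" "a' < 2" "n' < N" "\<not> f (a', m, n') < k"
  shows "\<forall>a<2. \<exists>n. (a, m, n) \<in> bd3 M N f k"
proof (intro allI impI)
  fix a :: nat assume a: "a < 2"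
  show "\<exists>n. (a, m, n) \<in> bd3 M N f k"
  proof (cases "\<exists>n2<N. \<not> f (a, m, n2) < k")
    case True
    then obtain n2 where "n2 < N" "\<not> f (a, m, n2) < k" by blast
    then show ?thesis using lineN_bd3[of a m M n1 N n2 f k] assms a by blast
  next
    case False
    then have "f (a, m, n') < k" using assms by blast
    then have "a' = 1 - a" using assms a by (cases "a' = a") auto
    then have "(a, m, n') \<in> bd3 M N f k" using rung_bd[of a m M n' N f k] assms a \<open>f (a, m, n') < k\<close> by blast
    then show ?thesis by blast
  qed
qed

lemma fatcol_bd:
  assumes "n < N" "m1 < M" "\<forall>a<2. f (a, m1, n) < k" "a' < 2" "m' < M" "\<not> f (a', m', n) < k"
  shows "\<forall>a<2. \<exists>m. (a, m, n) \<in> bd3 M N f k"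
proof (intro allI impI)
  fix a :: nat assume a: "a < 2"
  show "\<exists>m. (a, m, n) \<in> bd3 M N f k"
  proof (cases "\<exists>m2<M. \<not> f (a, m2, n) < k")
    case True
    then obtain m2 where "m2 < M" "\<not> f (a, m2, n) < k" by blast
    then show ?thesis using lineM_bd3[of a n N m1 M m2 f k] assms a by blast
  next
    case False
    then have "f (a, m', n) < k" using assms by blast
    then have "a' = 1 - a" using assms a by (cases "a' = a") auto
    then have "(a, m', n) \<in> bd3 M N f k" using rung_bd[of a m' M n N f k] assms a \<open>f (a, m', n) < k\<close> by blast
    then show ?thesis by blast
  qed
qed

lemma iso3:
  assumes M: "2 \<le> M" "M \<le> N" and f: "bij_betw f (grid3_V 2 M N) {0..<card (grid3_V 2 M N)}"
  shows "\<exists>k. 2 * M \<le> card (bd3 M N f k)"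
proof -
  let ?B = "bd3 M N f"
  have finB: "finite (?B k)" for k using grid3_V_fin unfolding bd_def by simp
  have flt: "a < 2 \<Longrightarrow> m < M \<Longrightarrow> n < N \<Longrightarrow> f (a, m, n) < 2 * M * N" for a m n
    using f grid3_V_card unfolding bij_betw_def by fastforce
  have finj: "a < 2 \<Longrightarrow> m < M \<Longrightarrow> n < N \<Longrightarrow> a' < 2 \<Longrightarrow> m' < M \<Longrightarrow> n' < N \<Longrightarrow>
      f (a, m, n) = f (a', m', n') \<Longrightarrow> a = a' \<and> m = m' \<and> n = n'"
    for a m n a' m' n' using f unfolding bij_betw_def inj_on_def by (metis grid3_V_iff prod.inject)
  define Q where "Q = (\<lambda>k. (\<exists>m<M. \<forall>a<2. \<forall>n<N. f (a, m, n) < k) \<or> (\<exists>n<N. \<forall>a<2. \<forall>m<M. f (a, m, n) < k))"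
  have QMN: "Q (2 * M * N)" unfolding Q_def using flt M by (intro disjI1 exI[of _ 0]) auto
  define k0 where "k0 = (LEAST k. Q k)"
  have Qk0: "Q k0" unfolding k0_def using QMN by (rule LeastI)
  have k0pos: "k0 \<noteq> 0"
  proof
    assume "k0 = 0"
    have "\<exists>a m n. f (a, m, n) < k0"
      using Qk0 unfolding Q_def
    proof (elim disjE exE conjE)
      fix m assume "m < M" "\<forall>a<2. \<forall>n<N. f (a, m, n) < k0"
      then have "f (0, m, 0) < k0" using M by simp
      then show ?thesis by blast
    next
      fix n assume "n < N" "\<forall>a<2. \<forall>m<M. f (a, m, n) < k0"
      then have "f (0, 0, n) < k0" using M by simp
      then show ?thesis by blast
    qed
    then show False using \<open>k0 = 0\<close> by simp
  qed
  define k' where "k' = k0 - 1"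
  have nQ: "\<not> Q k'" unfolding k'_def k0_def using not_less_Least[of "k0 - 1" Q] k0pos k0_def by auto
  have k0k': "k0 = Suc k'" using k0pos unfolding k'_def by simp
  let ?key = "\<lambda>v::nat \<times> nat \<times> nat. (fst v, fst (snd v))"
  let ?keyn = "\<lambda>v::nat \<times> nat \<times> nat. (fst v, snd (snd v))"
  show ?thesis
  proof (cases "\<exists>m<M. \<forall>a<2. \<forall>n<N. f (a, m, n) < k0")
    case False
    then obtain n1 where n1: "n1 < N" "\<forall>a<2. \<forall>m<M. f (a, m, n1) < k0" using Qk0 unfolding Q_def by blast
    have "\<forall>a<2. \<forall>i<M. \<exists>v\<in>?B k0. ?key v = (a, i)"
    proof (intro allI impI)
      fix a m :: nat assume a: "a < 2" and m: "m < M"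
      obtain a' n' where "a' < 2" "n' < N" "\<not> f (a', m, n') < k0" using False m by blast
      then have "\<forall>a<2. \<exists>n. (a, m, n) \<in> ?B k0" using fatrow_bd[of m M n1 N f k0 a' n'] n1 m by blast
      then obtain n where "(a, m, n) \<in> ?B k0" using a by blast
      then show "\<exists>v\<in>?B k0. ?key v = (a, m)" by (intro bexI[of _ "(a, m, n)"]) simp_all
    qed
    then have "2 * M \<le> card (?B k0)" by (rule count_keys2[OF finB])
    then show ?thesis by blast
  next
    case True
    then obtain m1 where m1: "m1 < M" "\<forall>a<2. \<forall>n<N. f (a, m1, n) < k0" by blast
    show ?thesis
    proof (cases "\<exists>n<N. \<forall>a<2. \<forall>m<M. f (a, m, n) < k0")
      case False
      have "\<forall>a<2. \<forall>i<N. \<exists>v\<in>?B k0. ?keyn v = (a, i)"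
      proof (intro allI impI)
        fix a n :: nat assume a: "a < 2" and n: "n < N"
        obtain a' m' where "a' < 2" "m' < M" "\<not> f (a', m', n) < k0" using False n by blast
        then have "\<forall>a<2. \<exists>m. (a, m, n) \<in> ?B k0" using fatcol_bd[of n N m1 M f k0 a' m'] m1 n by blast
        then obtain m where "(a, m, n) \<in> ?B k0" using a by blast
        then show "\<exists>v\<in>?B k0. ?keyn v = (a, n)" by (intro bexI[of _ "(a, m, n)"]) simp_all
      qed
      then have "2 * N \<le> card (?B k0)" by (rule count_keys2[OF finB])
      then show ?thesis using M by (intro exI[of _ k0]) linarith
    next
      case True
      then obtain n1 where n1: "n1 < N" "\<forall>a<2. \<forall>m<M. f (a, m, n1) < k0" by blast
      obtain aa na where na: "aa < 2" "na < N" "\<not> f (aa, m1, na) < k'" using nQ m1 unfolding Q_def by blast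
      obtain ab ma where ma: "ab < 2" "ma < M" "\<not> f (ab, ma, n1) < k'" using nQ n1 unfolding Q_def by blast
      have "f (aa, m1, na) = k'" using na m1 k0k' by (metis less_Suc_eq)
      moreover have "f (ab, ma, n1) = k'" using ma n1 k0k' by (metis less_Suc_eq)
      ultimately have "aa = ab \<and> m1 = ma \<and> na = n1" using finj[of aa m1 na ab ma n1] m1 na ma n1 by simp
      then have fv: "f (aa, m1, n1) = k'" using \<open>f (aa, m1, na) = k'\<close> by simp
      have "\<forall>a<2. \<forall>i<M. \<exists>v\<in>?B k'. ?key v = (a, i)"
      proof (intro allI impI)
        fix a m :: nat assume a: "a < 2" and m: "m < M"
        show "\<exists>v\<in>?B k'. ?key v = (a, m)"
        proof (cases "m = m1")
          case False
          have lt: "\<forall>a<2. f (a, m, n1) < k'"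
          proof (intro allI impI)
            fix b :: nat assume b: "b < 2"
            have "f (b, m, n1) \<noteq> k'" using finj[of b m n1 aa m1 n1] fv m n1 m1 na b False by auto
            then show "f (b, m, n1) < k'" using n1 m b k0k' by (metis less_Suc_eq)
          qed
          obtain a' n' where "a' < 2" "n' < N" "\<not> f (a', m, n') < k'" using nQ m unfolding Q_def by blast
          then have "\<forall>a<2. \<exists>n. (a, m, n) \<in> ?B k'" using fatrow_bd[of m M n1 N f k' a' n'] n1 m lt by blast
          then obtain n where "(a, m, n) \<in> ?B k'" using a by blast
          then show ?thesis by (intro bexI[of _ "(a, m, n)"]) simp_all
        next
          case True
          show ?thesis
          proof (cases "a = aa")
            case True
            define n' where "n' = (if Suc n1 < N then Suc n1 else n1 - 1)"
            have n': "n' < N" "n' \<noteq> n1" using n1 M unfolding n'_def by auto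
            have "f (aa, m1, n') \<noteq> k'" using finj[of aa m1 n' aa m1 n1] fv n' n1 m1 na by auto
            then have lt: "f (aa, m1, n') < k'" using m1 n' na k0k' by (metis less_Suc_eq)
            have "{(aa, m1, n'), (aa, m1, n1)} \<in> grid3_E 2 M N"
            proof (cases "Suc n1 < N")
              case True then show ?thesis using grid3_E_n[OF na(1) m1(1) True] unfolding n'_def
                by (simp add: insert_commute)
            next
              case False
              then have "n1 = Suc n'" using n' n1 unfolding n'_def by auto
              then show ?thesis using grid3_E_n[OF na(1) m1(1), of n'] n1 by simp
            qed
            then have "(aa, m1, n') \<in> ?B k'" unfolding bd_def using lt fv m1 n' n1 na by auto
            then show ?thesis using \<open>m = m1\<close> True by (intro bexI[of _ "(aa, m1, n')"]) simp_all
          next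
            case False
            then have a1: "aa = 1 - a" using a na by auto
            have "f (a, m1, n1) \<noteq> k'" using finj[of a m1 n1 aa m1 n1] fv a m1 n1 na False by auto
            then have lt: "f (a, m1, n1) < k'" using m1 n1 a k0k' by (metis less_Suc_eq)
            have "(a, m1, n1) \<in> ?B k'" using rung_bd[of a m1 M n1 N f k'] a m1 n1 lt fv a1 by simp
            then show ?thesis using \<open>m = m1\<close> by (intro bexI[of _ "(a, m1, n1)"]) simp_all
          qed
        qed
      qed
      then have "2 * M \<le> card (?B k')" by (rule count_keys2[OF finB])
    then show ?thesis by blast
    qed
  qed
qed

definition brick :: "nat \<Rightarrow> nat \<Rightarrow> nat set" where
  "brick n c = {i. i + 1 < n \<and> even (i + c)}"

definition bricks :: "nat \<Rightarrow> nat \<Rightarrow> nat \<Rightarrow> nat set list" where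
  "bricks n h1 d = map (\<lambda>t. brick n (t + h1)) [0..<d]"

definition pi0 :: "nat \<Rightarrow> nat \<Rightarrow> nat \<Rightarrow> ('v \<Rightarrow> nat) \<Rightarrow> 'v \<Rightarrow> nat" where
  "pi0 n h1 d mid = foldl (\<lambda>\<pi> L. swap_pos L \<circ> \<pi>) mid (rev (take h1 (bricks n h1 d)))"

lemma brick_layer: "swap_layer n (brick n c)"
  unfolding swap_layer_def brick_def by auto

lemma bricks_layers: "\<forall>L\<in>set (bricks n h1 d). swap_layer n L"
  unfolding bricks_def using brick_layer by auto

lemma length_bricks[simp]: "length (bricks n h1 d) = d"
  unfolding bricks_def by simp

lemma bricks_nth: "t < d \<Longrightarrow> bricks n h1 d ! t = brick n (t + h1)"
  unfolding bricks_def by simp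

lemma swap_pos_brick:
  "swap_pos (brick n c) p =
    (if p + 1 < n \<and> even (p + c) then p + 1 else if 0 < p \<and> p < n \<and> odd (p + c) then p - 1 else p)"
proof -
  have "0 < p \<Longrightarrow> (p - 1 + 1 < n \<and> even (p - 1 + c)) = (p < n \<and> odd (p + c))"
    by (cases p) auto
  then show ?thesis unfolding swap_pos_def brick_def by auto
qed

lemma par0: "(x::nat) = p + 2 * z \<Longrightarrow> even p \<Longrightarrow> even x" by simp
lemma par1: "(x::nat) + 1 = p + 2 * z \<Longrightarrow> odd p \<Longrightarrow> even x" by presburger
lemma par2: "(x::nat) + 2 * s + 1 = q + 2 * z \<Longrightarrow> even q \<Longrightarrow> odd x" by presburger

lemma par3: "even ((a::nat) + r) \<Longrightarrow> even (b + r) \<Longrightarrow> b = a + 1 \<Longrightarrow> False" by presburger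

lemma config_Suc': "t < length Ls \<Longrightarrow> config \<pi>0 Ls (Suc t) v = swap_pos (Ls!t) (config \<pi>0 Ls t v)"
  by (simp add: config_Suc)

lemma pi0_bij: "bij_betw mid V {0..<n} \<Longrightarrow> bij_betw (pi0 n h1 d mid) V {0..<n}"
  unfolding pi0_def
  by (rule foldl_bij) (use bricks_layers[of n h1 d] set_take_subset[of h1 "bricks n h1 d"] in auto)

lemma cfg_mid: "h1 \<le> d \<Longrightarrow> config (pi0 n h1 d mid) (bricks n h1 d) h1 = mid"
  unfolding config_def pi0_def
  by (rule foldl_inv) (use bricks_layers[of n h1 d] set_take_subset[of h1 "bricks n h1 d"] in \<open>auto simp: swap_layer_def\<close>)

lemma cfg_back:
  assumes "t < length Ls" "\<forall>L\<in>set Ls. swap_layer n L"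
  shows "config \<pi>0 Ls t v = swap_pos (Ls ! t) (config \<pi>0 Ls (Suc t) v)"
proof -
  have "Ls ! t \<in> set Ls" using assms(1) by simp
  then have inv: "\<forall>i\<in>Ls ! t. i + 1 \<notin> Ls ! t" using assms(2) unfolding swap_layer_def by blast
  have "config \<pi>0 Ls (Suc t) v = swap_pos (Ls ! t) (config \<pi>0 Ls t v)"
    by (simp add: config_Suc[OF assms(1)])
  then show ?thesis using swap_pos_inv[OF inv] by simp
qed

lemma fwd_move:
  assumes hd: "h1 \<le> d" and x: "mid x = p" and y: "mid y = q" and pq: "p + 2 * k + 1 = q"
    and ev: "even p" and qn: "q < n"
  shows "s \<le> k \<Longrightarrow> h1 + s \<le> d \<Longrightarrow>
    config (pi0 n h1 d mid) (bricks n h1 d) (h1 + s) x = p + s \<and>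
    config (pi0 n h1 d mid) (bricks n h1 d) (h1 + s) y = q - s"
proof (induction s)
  case 0
  have "config (pi0 n h1 d mid) (bricks n h1 d) h1 = mid" by (rule cfg_mid[OF hd])
  then show ?case using x y by simp
next
  case (Suc s)
  let ?c = "config (pi0 n h1 d mid) (bricks n h1 d)"
  have lt: "h1 + s < length (bricks n h1 d)" using Suc.prems by simp
  have IH: "?c (h1 + s) x = p + s" "?c (h1 + s) y = q - s" using Suc by auto
  have L: "bricks n h1 d ! (h1 + s) = brick n (h1 + s + h1)" using bricks_nth lt by simp
  have e1: "even (p + s + (h1 + s + h1))"
  proof -
    have "p + s + (h1 + s + h1) = p + 2 * (s + h1)" by simp
    then show ?thesis using ev by (rule par0)
  qed
  have e2: "q - s + (h1 + s + h1) = q + 2 * h1" using Suc.prems pq by simp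
  have oq: "odd q" using ev pq by auto
  have "?c (h1 + Suc s) x = swap_pos (brick n (h1 + s + h1)) (p + s)"
    using config_Suc'[OF lt, of _ x] IH L by simp
  also have "\<dots> = p + Suc s" unfolding swap_pos_brick using e1 Suc.prems pq qn by auto
  finally have 1: "?c (h1 + Suc s) x = p + Suc s" .
  have "?c (h1 + Suc s) y = swap_pos (brick n (h1 + s + h1)) (q - s)"
    using config_Suc'[OF lt, of _ y] IH L by simp
  also have "\<dots> = q - Suc s" unfolding swap_pos_brick using e2 oq Suc.prems pq qn by auto
  finally show ?case using 1 by simp
qed

lemma fwd_swap:
  assumes hd: "h1 + k + 1 \<le> d" and x: "mid x = p" and y: "mid y = q" and pq: "p + 2 * k + 1 = q"
    and ev: "even p" and qn: "q < n"
  shows "config (pi0 n h1 d mid) (bricks n h1 d) (h1 + k + 1) x = p + k + 1 \<and>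
         config (pi0 n h1 d mid) (bricks n h1 d) (h1 + k + 1) y = p + k"
proof -
  let ?c = "config (pi0 n h1 d mid) (bricks n h1 d)"
  have m: "?c (h1 + k) x = p + k" "?c (h1 + k) y = p + k + 1"
    using fwd_move[of h1 d mid x p y q k n k] x y pq ev qn hd by auto
  have lt: "h1 + k < length (bricks n h1 d)" using hd by simp
  have L: "bricks n h1 d ! (h1 + k) = brick n (h1 + k + h1)" using bricks_nth lt by simp
  have e1: "even (p + k + (h1 + k + h1))"
  proof -
    have "p + k + (h1 + k + h1) = p + 2 * (k + h1)" by simp
    then show ?thesis using ev by (rule par0)
  qed
  have "?c (h1 + k + 1) x = swap_pos (brick n (h1 + k + h1)) (p + k)"
    using config_Suc'[OF lt, of _ x] m L by simp
  also have "\<dots> = p + k + 1" unfolding swap_pos_brick using e1 pq qn by auto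
  finally have 1: "?c (h1 + k + 1) x = p + k + 1" .
  have "?c (h1 + k + 1) y = swap_pos (brick n (h1 + k + h1)) (p + k + 1)"
    using config_Suc'[OF lt, of _ y] m L by simp
  also have "\<dots> = p + k" unfolding swap_pos_brick using e1 pq qn by auto
  finally show ?thesis using 1 by simp
qed

lemma bwd_move:
  assumes hd: "h1 \<le> d" and x: "mid x = p" and y: "mid y = q" and pq: "p + 2 * k + 1 = q"
    and od: "odd p" and qn: "q < n"
  shows "s \<le> k \<Longrightarrow> s \<le> h1 \<Longrightarrow>
    config (pi0 n h1 d mid) (bricks n h1 d) (h1 - s) x = p + s \<and>
    config (pi0 n h1 d mid) (bricks n h1 d) (h1 - s) y = q - s"
proof (induction s)
  case 0
  have "config (pi0 n h1 d mid) (bricks n h1 d) h1 = mid" by (rule cfg_mid[OF hd])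
  then show ?case using x y by simp
next
  case (Suc s)
  let ?c = "config (pi0 n h1 d mid) (bricks n h1 d)"
  define t where "t = h1 - Suc s"
  have tS: "Suc t = h1 - s" using Suc.prems unfolding t_def by simp
  have lt: "t < length (bricks n h1 d)" using Suc.prems hd unfolding t_def by simp
  have IH: "?c (Suc t) x = p + s" "?c (Suc t) y = q - s" using Suc tS by auto
  have L: "bricks n h1 d ! t = brick n (t + h1)" using bricks_nth lt by simp
  have T: "t + h1 + s + 1 = 2 * h1" using Suc.prems unfolding t_def by simp
  have e1: "even (p + s + (t + h1))"
  proof -
    have "p + s + (t + h1) + 1 = p + 2 * h1" using T by simp
    then show ?thesis using od by (rule par1)
  qed
  have e2: "odd (q - s + (t + h1))"
  proof -
    have "q - s + (t + h1) + 2 * s + 1 = q + 2 * h1" using T Suc.prems pq by linarith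
    moreover have "even q" using od pq by auto
    ultimately show ?thesis by (rule par2)
  qed
  have "?c t x = swap_pos (bricks n h1 d ! t) (?c (Suc t) x)"
    by (rule cfg_back[OF lt bricks_layers])
  also have "\<dots> = swap_pos (brick n (t + h1)) (p + s)" using IH L by simp
  also have "\<dots> = p + Suc s" unfolding swap_pos_brick using e1 Suc.prems pq qn by auto
  finally have 1: "?c t x = p + Suc s" .
  have "?c t y = swap_pos (bricks n h1 d ! t) (?c (Suc t) y)"
    by (rule cfg_back[OF lt bricks_layers])
  also have "\<dots> = swap_pos (brick n (t + h1)) (q - s)" using IH L by simp
  also have "\<dots> = q - Suc s" unfolding swap_pos_brick using e2 Suc.prems pq qn by auto
  finally show ?case using 1 unfolding t_def by simp
qed

definition lay :: "'v set set \<Rightarrow> ('v \<Rightarrow> nat) \<Rightarrow> nat \<Rightarrow> ('v \<Rightarrow> bool) \<Rightarrow> 'v set set" where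
  "lay E c r P = {e \<in> E. \<exists>v w. e = {v, w} \<and> P v \<and> P w \<and> c v + 1 = c w \<and> even (c v + r)}"

lemma lay_mem: "{v, w} \<in> E \<Longrightarrow> P v \<Longrightarrow> P w \<Longrightarrow> c v + 1 = c w \<Longrightarrow> even (c v + r) \<Longrightarrow> {v, w} \<in> lay E c r P"
  unfolding lay_def by blast

lemma lay_mem': "{v, w} \<in> E \<Longrightarrow> P v \<Longrightarrow> P w \<Longrightarrow> c w + 1 = c v \<Longrightarrow> even (c w + r) \<Longrightarrow> {v, w} \<in> lay E c r P"
  using lay_mem[of w v E P c r] by (simp add: insert_commute)

lemma lay_il:
  assumes inj: "inj_on c V" and EV: "\<forall>e\<in>E. e \<subseteq> V" and PP: "\<forall>v. \<not> (P1 v \<and> P2 v)"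
  shows "interaction_layer E c (lay E c r1 P1 \<union> lay E c r2 P2)"
  unfolding interaction_layer_def
proof (intro conjI ballI impI)
  show "lay E c r1 P1 \<union> lay E c r2 P2 \<subseteq> E" unfolding lay_def by auto
next
  fix e assume "e \<in> lay E c r1 P1 \<union> lay E c r2 P2"
  then show "\<exists>v w. e = {v, w} \<and> (c v + 1 = c w \<or> c w + 1 = c v)" unfolding lay_def by blast
next
  fix e e' assume e: "e \<in> lay E c r1 P1 \<union> lay E c r2 P2" and e': "e' \<in> lay E c r1 P1 \<union> lay E c r2 P2"
    and ne: "e \<noteq> e'"
  have key: "e = e'" if h1: "e \<in> lay E c r P" and h2: "e' \<in> lay E c r P" and h3: "z \<in> e" and h4: "z \<in> e'" for r P z
  proof -
    obtain v w where vw: "e = {v, w}" "c v + 1 = c w" "even (c v + r)" "e \<in> E"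
      using h1 unfolding lay_def by blast
    obtain v' w' where vw': "e' = {v', w'}" "c v' + 1 = c w'" "even (c v' + r)" "e' \<in> E"
      using h2 unfolding lay_def by blast
    have V: "v \<in> V" "w \<in> V" "v' \<in> V" "w' \<in> V" using EV vw vw' by auto
    have eq: "a = b" if "c a = c b" "a \<in> V" "b \<in> V" for a b using inj that inj_on_def by metis
    have "z = v \<or> z = w" "z = v' \<or> z = w'" using h3 h4 vw vw' by auto
    then show ?thesis
    proof (elim disjE)
      assume "z = v" "z = v'"
      then have "c w = c w'" using vw vw' by simp
      then show ?thesis using eq V vw vw' \<open>z = v\<close> \<open>z = v'\<close> by metis
    next
      assume "z = v" "z = w'"
      then have "c v = c v' + 1" using vw' by simp
      then show ?thesis using par3[OF vw'(3) vw(3)] by blast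
    next
      assume "z = w" "z = v'"
      then have "c v' = c v + 1" using vw by simp
      then show ?thesis using par3[OF vw(3) vw'(3)] by blast
    next
      assume "z = w" "z = w'"
      then have "c v = c v'" using vw vw' by simp
      then show ?thesis using eq V vw vw' \<open>z = w\<close> \<open>z = w'\<close> by metis
    qed
  qed
  have P: "\<forall>z\<in>e. P z" if "e \<in> lay E c r P" for e r P using that unfolding lay_def by blast
  show "e \<inter> e' = {}"
  proof (rule ccontr)
    assume "e \<inter> e' \<noteq> {}"
    then obtain z where z: "z \<in> e" "z \<in> e'" by blast
    show False using e e'
    proof (elim UnE)
      assume "e \<in> lay E c r1 P1" "e' \<in> lay E c r1 P1" then show False using key z ne by blast
    next
      assume "e \<in> lay E c r2 P2" "e' \<in> lay E c r2 P2" then show False using key z ne by blast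
    next
      assume "e \<in> lay E c r1 P1" "e' \<in> lay E c r2 P2" then show False using P z PP by blast
    next
      assume "e \<in> lay E c r2 P2" "e' \<in> lay E c r1 P1" then show False using P z PP by blast
    qed
  qed
qed

lemma lay_il1:
  assumes inj: "inj_on c V" and EV: "\<forall>e\<in>E. e \<subseteq> V"
  shows "interaction_layer E c (lay E c r P)"
proof -
  have "lay E c r (\<lambda>_. False) = {}" unfolding lay_def by simp
  then show ?thesis using lay_il[OF inj EV, of P "\<lambda>_. False" r r] by simp
qed

lemma net_valid:
  assumes bij: "bij_betw mid V {0..<n}" and cV: "card V = n" and hd: "h1 \<le> d"
    and lay_ok: "\<forall>(t, I)\<in>set Is. t \<le> d \<and> interaction_layer E (config (pi0 n h1 d mid) (bricks n h1 d) t) I"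
    and cover: "\<forall>e\<in>E. \<exists>(t, I)\<in>set Is. e \<in> I"
  shows "swap_network V E (pi0 n h1 d mid) (bricks n h1 d) Is"
  unfolding swap_network_def using pi0_bij[OF bij] cV bricks_layers lay_ok cover by simp

lemma cfg_inj:
  assumes bij: "bij_betw mid V {0..<n}"
  shows "inj_on (config (pi0 n h1 d mid) (bricks n h1 d) t) V"
  using config_bij[OF bricks_layers pi0_bij[OF bij]] bij_betw_def by blast

lemma grid2_V_eq: "grid2_V M N = {0..<M} \<times> {0..<N}"
  unfolding grid2_V_def by auto

lemma grid2_EV: "\<forall>e\<in>grid2_E M N. e \<subseteq> grid2_V M N"
  unfolding grid2_E_def grid2_V_def by auto

lemma grid2_E_cases:
  assumes "e \<in> grid2_E M N"
  obtains m n where "e = {(m, n), (Suc m, n)}" "Suc m < M" "n < N"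
    | m n where "e = {(m, n), (m, Suc n)}" "m < M" "Suc n < N"
  using assms unfolding grid2_E_def by auto

lemma bij_lin: "0 < (M::nat) \<Longrightarrow> bij_betw (\<lambda>(m, n). n * M + m) ({0..<M} \<times> {0..<N}) {0..<M * N}"
proof (rule bij_betw_byWitness[where f'="\<lambda>p. (p mod M, p div M)"])
  assume M: "0 < M"
  show "\<forall>a\<in>{0..<M} \<times> {0..<N}. (\<lambda>p. (p mod M, p div M)) ((\<lambda>(m, n). n * M + m) a) = a" by auto
  show "\<forall>a'\<in>{0..<M * N}. (\<lambda>(m, n). n * M + m) (a' mod M, a' div M) = a'" by simp
  show "(\<lambda>(m, n). n * M + m) ` ({0..<M} \<times> {0..<N}) \<subseteq> {0..<M * N}"
  proof clarsimp
    fix m n assume "m < M" "n < N"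
    then have "n * M + m < n * M + M" by simp
    also have "\<dots> = (n + 1) * M" by simp
    also have "\<dots> \<le> N * M" using \<open>n < N\<close> by (intro mult_right_mono) auto
    finally show "n * M + m < M * N" by (simp add: mult.commute)
  qed
  show "(\<lambda>p. (p mod M, p div M)) ` {0..<M * N} \<subseteq> {0..<M} \<times> {0..<N}"
    using M by (auto simp: less_mult_imp_div_less mult.commute)
qed

definition midO :: "nat \<Rightarrow> nat \<times> nat \<Rightarrow> nat" where
  "midO M = (\<lambda>(m, n). n * M + m)"

abbreviation "CO M N \<equiv> config (pi0 (M * N) (M div 2) (2 * (M div 2)) (midO M)) (bricks (M * N) (M div 2) (2 * (M div 2)))"

lemma odd_cover:
  assumes M: "odd M" and e: "e \<in> grid2_E M N"
  defines "h \<equiv> M div 2"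
  shows "e \<in> lay (grid2_E M N) (CO M N 0) (h + 1) (\<lambda>_. True) \<or>
         e \<in> lay (grid2_E M N) (CO M N h) 0 (\<lambda>_. True) \<or>
         e \<in> lay (grid2_E M N) (CO M N h) 1 (\<lambda>_. True) \<or>
         e \<in> lay (grid2_E M N) (CO M N (2 * h)) h (\<lambda>_. True)"
proof -
  let ?E = "grid2_E M N"
  have Mh: "M = 2 * h + 1" using M unfolding h_def by presburger
  have hd: "h \<le> 2 * h" by simp
  from e show ?thesis
  proof (cases rule: grid2_E_cases)
    case (1 m n)
    let ?x = "(m, n)" and ?y = "(Suc m, n)"
    have c: "CO M N h = midO M" unfolding h_def by (rule cfg_mid) simp
    have cx: "CO M N h ?x + 1 = CO M N h ?y" by (simp only: c) (simp add: midO_def)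
    have "?x \<noteq> ?y" by simp
    show ?thesis
    proof (cases "even (CO M N h ?x)")
      case True
      have "e \<in> lay ?E (CO M N h) 0 (\<lambda>_. True)" unfolding 1(1) by (rule lay_mem[where c="CO M N h", OF _ _ _ cx]) (use e 1 True in auto)
      then show ?thesis by blast
    next
      case False
      have "e \<in> lay ?E (CO M N h) 1 (\<lambda>_. True)" unfolding 1(1) by (rule lay_mem[where c="CO M N h", OF _ _ _ cx]) (use e 1 False in auto)
      then show ?thesis by blast
    qed
  next
    case (2 m n)
    let ?x = "(m, n)" and ?y = "(m, Suc n)"
    define p where "p = n * M + m"
    have x: "midO M ?x = p" unfolding midO_def p_def by simp
    have y: "midO M ?y = p + 2 * h + 1" unfolding midO_def p_def using Mh by simp
    have qn: "p + 2 * h + 1 < M * N"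
    proof -
      have "p + 2 * h + 1 = Suc n * M + m" unfolding p_def using Mh by simp
      also have "\<dots> < Suc n * M + M" using 2 by simp
      also have "\<dots> = (n + 2) * M" by simp
      also have "\<dots> \<le> N * M" using 2 by (intro mult_right_mono) auto
      finally show ?thesis by (simp add: mult.commute)
    qed
    show ?thesis
    proof (cases "even p")
      case True
      have "CO M N (h + h) ?x = p + h \<and> CO M N (h + h) ?y = p + 2 * h + 1 - h"
        using fwd_move[where mid="midO M" and x="(m, n)" and y="(m, Suc n)" and s=h, OF hd x y refl True qn] unfolding h_def by simp
      then have cc: "CO M N (2 * h) ?x + 1 = CO M N (2 * h) ?y" "CO M N (2 * h) ?x = p + h"
        by (simp_all add: mult_2)
      have "even (CO M N (2 * h) ?x + h)" using cc(2) True by simp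
      then have "e \<in> lay ?E (CO M N (2 * h)) h (\<lambda>_. True)"
        unfolding 2(1) by (intro lay_mem) (use e 2 cc in auto)
      then show ?thesis by blast
    next
      case False
      have "CO M N (h - h) ?x = p + h \<and> CO M N (h - h) ?y = p + 2 * h + 1 - h"
        using bwd_move[where mid="midO M" and x="(m, n)" and y="(m, Suc n)" and s=h, OF hd x y refl False qn] unfolding h_def by simp
      then have cc: "CO M N 0 ?x + 1 = CO M N 0 ?y" "CO M N 0 ?x = p + h" by simp_all
      have "even (CO M N 0 ?x + (h + 1))" using cc(2) False by simp
      then have "e \<in> lay ?E (CO M N 0) (h + 1) (\<lambda>_. True)"
        unfolding 2(1) by (intro lay_mem) (use e 2 cc in auto)
      then show ?thesis by blast
    qed
  qed
qed

definition sig :: "nat \<Rightarrow> nat \<Rightarrow> nat" where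
  "sig n j = (if even n then j else if even j then j + 1 else j - 1)"

definition posE :: "nat \<Rightarrow> nat \<Rightarrow> nat \<Rightarrow> nat" where
  "posE K n j = n * K + sig n j"

lemma even_lt_Suc: "even (K::nat) \<Longrightarrow> even j \<Longrightarrow> j < K \<Longrightarrow> Suc j < K" by presburger

lemma sig_lt: "even K \<Longrightarrow> j < K \<Longrightarrow> sig n j < K"
  unfolding sig_def using even_lt_Suc by auto

lemma sig_sig: "even K \<Longrightarrow> j < K \<Longrightarrow> sig n (sig n j) = j"
  unfolding sig_def by (auto elim: oddE)

lemma bij_posE:
  assumes K: "even K" "0 < K"
  shows "bij_betw (\<lambda>(j, n). posE K n j) ({0..<K} \<times> {0..<N}) {0..<K * N}"
proof (rule bij_betw_byWitness[where f'="\<lambda>p. (sig (p div K) (p mod K), p div K)"])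
  have d: "(n * K + sig n j) div K = n" "(n * K + sig n j) mod K = sig n j" if "j < K" for n j
    using sig_lt[OF K(1) that, of n] K by auto
  show "\<forall>a\<in>{0..<K} \<times> {0..<N}. (\<lambda>p. (sig (p div K) (p mod K), p div K)) ((\<lambda>(j, n). posE K n j) a) = a"
    using d sig_sig[OF K(1)] unfolding posE_def by auto
  show "\<forall>a'\<in>{0..<K * N}. (\<lambda>(j, n). posE K n j) (sig (a' div K) (a' mod K), a' div K) = a'"
    using sig_sig[OF K(1)] K unfolding posE_def by simp
  show "(\<lambda>(j, n). posE K n j) ` ({0..<K} \<times> {0..<N}) \<subseteq> {0..<K * N}"
  proof clarsimp
    fix j n assume "j < K" "n < N"
    then have "n * K + sig n j < n * K + K" using sig_lt[OF K(1)] by simp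
    also have "\<dots> = (n + 1) * K" by simp
    also have "\<dots> \<le> N * K" using \<open>n < N\<close> by (intro mult_right_mono) auto
    finally show "posE K n j < K * N" unfolding posE_def by (simp add: mult.commute)
  qed
  show "(\<lambda>p. (sig (p div K) (p mod K), p div K)) ` {0..<K * N} \<subseteq> {0..<K} \<times> {0..<N}"
    using K sig_lt[OF K(1)] by (auto simp: less_mult_imp_div_less mult.commute)
qed

lemma posE_bound: "even K \<Longrightarrow> j < K \<Longrightarrow> Suc n < N \<Longrightarrow> posE K (Suc n) j < K * N"
proof -
  assume K: "even K" "j < K" "Suc n < N"
  have "posE K (Suc n) j < Suc n * K + K" unfolding posE_def using sig_lt[OF K(1,2)] by simp
  also have "\<dots> = (n + 2) * K" by simp
  also have "\<dots> \<le> N * K" using K by (intro mult_right_mono) auto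
  finally show ?thesis by (simp add: mult.commute)
qed

lemma posE_bound0: "even K \<Longrightarrow> j < K \<Longrightarrow> n < N \<Longrightarrow> posE K n j < K * N"
proof -
  assume K: "even K" "j < K" "n < N"
  have "posE K n j < n * K + K" unfolding posE_def using sig_lt[OF K(1,2)] by simp
  also have "\<dots> = (n + 1) * K" by simp
  also have "\<dots> \<le> N * K" using K by (intro mult_right_mono) auto
  finally show ?thesis by (simp add: mult.commute)
qed

context
  fixes h N :: nat and mid :: "'v \<Rightarrow> nat"
begin

abbreviation "CE \<equiv> config (pi0 ((2 * h + 2) * N) h (2 * h + 1) mid) (bricks ((2 * h + 2) * N) h (2 * h + 1))"

lemma h1d: "h \<le> 2 * h + 1" by simp

lemma evH:
  assumes x: "mid x = posE (2 * h + 2) n j" and y: "mid y = posE (2 * h + 2) (Suc n) j"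
    and j: "j < 2 * h + 2" and n: "Suc n < N"
  shows "(CE 0 x + 1 = CE 0 y \<and> even (CE 0 x + (h + 1))) \<or>
         (CE (2 * h + 1) x + 1 = CE (2 * h + 1) y \<and> even (CE (2 * h + 1) x + (h + 1)))"
proof -
  let ?K = "2 * h + 2"
  have K: "even ?K" by simp
  have qn: "posE ?K (Suc n) j < ?K * N" using posE_bound[OF K j n] .
  define p where "p = posE ?K n j"
  have fw: ?thesis if ev: "even p" and pq: "p + 2 * (h + 1) + 1 = posE ?K (Suc n) j"
  proof -
    have A: "CE (h + (h + 1)) x = p + (h + 1) \<and> CE (h + (h + 1)) y = posE ?K (Suc n) j - (h + 1)"
      using fwd_move[where mid=mid and x=x and y=y and s="h + 1", OF h1d _ y pq ev qn] x p_def by simp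
    have eq: "h + (h + 1) = 2 * h + 1" by simp
    have B: "CE (2 * h + 1) x = p + (h + 1)" "CE (2 * h + 1) y = posE ?K (Suc n) j - (h + 1)"
      using A unfolding eq by auto
    then have "CE (2 * h + 1) x = p + (h + 1)" "CE (2 * h + 1) y = p + (h + 1) + 1" using pq by simp_all
    moreover have "even (p + (h + 1) + (h + 1))" using ev by simp
    ultimately show ?thesis by simp
  qed
  have bw: ?thesis if od: "odd p" and pq: "p + 2 * h + 1 = posE ?K (Suc n) j"
  proof -
    have "CE (h - h) x = p + h \<and> CE (h - h) y = posE ?K (Suc n) j - h"
      using bwd_move[where mid=mid and x=x and y=y and s="h", OF h1d _ y pq od qn] x p_def by simp
    then have "CE 0 x = p + h" "CE 0 y = p + h + 1" using pq by simp_all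
    moreover have "even (p + h + (h + 1))" using od by simp
    ultimately show ?thesis by simp
  qed
  have evK: "even (n * ?K)" by simp
  show ?thesis
  proof (cases "even n")
    case True
    show ?thesis
    proof (cases "even j")
      case True
      then show ?thesis using fw \<open>even n\<close> evK unfolding p_def posE_def sig_def by simp
    next
      case False
      then have "j \<ge> 1" by (cases j) auto
      then show ?thesis using bw \<open>even n\<close> False evK unfolding p_def posE_def sig_def by simp
    qed
  next
    case False
    show ?thesis
    proof (cases "even j")
      case True
      then show ?thesis using bw \<open>odd n\<close> evK unfolding p_def posE_def sig_def by simp
    next
      case odd: False
      then have "j \<ge> 1" by (cases j) auto
      then show ?thesis using fw \<open>odd n\<close> odd evK unfolding p_def posE_def sig_def by simp
    qed
  qed
qed

lemma cE_mid: "CE h = mid" by (rule cfg_mid) simp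

lemma evC1:
  assumes x: "mid x = posE (2 * h + 2) n j" and y: "mid y = posE (2 * h + 2) n (Suc j)"
    and j: "Suc j < 2 * h + 2" and n: "n < N"
  shows "(even n \<longrightarrow> CE h x + 1 = CE h y \<and> CE h x = n * (2 * h + 2) + j) \<and>
    (even n \<and> even j \<longrightarrow> CE (h + 1) y + 1 = CE (h + 1) x \<and> CE (h + 1) y = n * (2 * h + 2) + j) \<and>
    (odd n \<and> even j \<longrightarrow> CE h y + 1 = CE h x \<and> CE h y = n * (2 * h + 2) + j) \<and>
    (odd n \<and> odd j \<longrightarrow> CE (h + 1) x + 1 = CE (h + 1) y \<and> CE (h + 1) x = n * (2 * h + 2) + j)"
proof -
  let ?K = "2 * h + 2"
  have K: "even ?K" by simp
  have qn: "posE ?K n (Suc j) < ?K * N" using posE_bound0[OF K j n] .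
  have A: "even n \<longrightarrow> CE h x + 1 = CE h y \<and> CE h x = n * ?K + j"
    using x y unfolding cE_mid posE_def sig_def by simp
  have B: "CE (h + 1) y + 1 = CE (h + 1) x \<and> CE (h + 1) y = n * ?K + j" if "even n" "even j"
  proof -
    have xx: "mid x = n * ?K + j" "mid y = n * ?K + j + 2 * 0 + 1" using x y that unfolding posE_def sig_def by simp_all
    have "even (n * ?K + j)" using that by simp
    have "CE (h + 0 + 1) x = n * ?K + j + 0 + 1 \<and> CE (h + 0 + 1) y = n * ?K + j + 0"
      by (rule fwd_swap[where mid=mid, OF _ xx(1) xx(2) refl]) (use \<open>even (n * ?K + j)\<close> qn xx that in \<open>simp_all add: posE_def sig_def\<close>)
    then show ?thesis by simp
  qed
  have C: "CE h y + 1 = CE h x \<and> CE h y = n * ?K + j" if "odd n" "even j"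
    using x y that unfolding cE_mid posE_def sig_def by simp
  have D: "CE (h + 1) x + 1 = CE (h + 1) y \<and> CE (h + 1) x = n * ?K + j" if "odd n" "odd j"
  proof -
    have j1: "j \<ge> 1" using that by (cases j) auto
    define p where "p = n * ?K + j - 1"
    have xx: "mid x = p" "mid y = p + 2 * 1 + 1" using x y that j1 unfolding posE_def sig_def p_def by simp_all
    have ev: "even p" using that j1 unfolding p_def by simp
    have q: "p + 2 * 1 + 1 < ?K * N" using qn xx y by simp
    have "CE (h + 1) x = p + 1 \<and> CE (h + 1) y = p + 2 * 1 + 1 - 1"
      by (rule fwd_move[where mid=mid, OF _ xx(1) xx(2) refl ev q]) simp_all
    then show ?thesis using j1 unfolding p_def by simp
  qed
  show ?thesis using A B C D by blast
qed

lemma evC3: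
  assumes x: "mid x = posE (2 * h + 2) n j" and y: "mid y = posE (2 * h + 2) n (j + 3)"
    and j: "j + 3 < 2 * h + 2" "even j" and n: "n < N"
  shows "(even n \<longrightarrow> CE (h + 1) x + 1 = CE (h + 1) y \<and> CE (h + 1) x = n * (2 * h + 2) + j + 1) \<and>
    (odd n \<longrightarrow> CE h x + 1 = CE h y \<and> CE h x = n * (2 * h + 2) + j + 1)"
proof -
  let ?K = "2 * h + 2"
  have K: "even ?K" by simp
  have qn: "posE ?K n (j + 3) < ?K * N" using posE_bound0[OF K j(1) n] .
  have A: "CE (h + 1) x + 1 = CE (h + 1) y \<and> CE (h + 1) x = n * ?K + j + 1" if "even n"
  proof -
    define p where "p = n * ?K + j"
    have xx: "mid x = p" "mid y = p + 2 * 1 + 1" using x y that unfolding posE_def sig_def p_def by simp_all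
    have ev: "even p" using that j unfolding p_def by simp
    have q: "p + 2 * 1 + 1 < ?K * N" using qn xx y by simp
    have "CE (h + 1) x = p + 1 \<and> CE (h + 1) y = p + 2 * 1 + 1 - 1"
      by (rule fwd_move[where mid=mid, OF _ xx(1) xx(2) refl ev q]) simp_all
    then show ?thesis unfolding p_def by simp
  qed
  have B: "CE h x + 1 = CE h y \<and> CE h x = n * ?K + j + 1" if "odd n"
    using x y that j unfolding cE_mid posE_def sig_def by simp
  show ?thesis using A B by blast
qed

lemma memC1:
  assumes x: "mid x = posE (2 * h + 2) n j" and y: "mid y = posE (2 * h + 2) n (Suc j)"
    and j: "Suc j < 2 * h + 2" and n: "n < N" and cx: "col x = n" and cy: "col y = n" and e: "{x, y} \<in> E"
  shows "{x, y} \<in> lay E (CE h) 1 (\<lambda>v. even (col v)) \<union> lay E (CE h) 0 (\<lambda>v. odd (col v)) \<or>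
         {x, y} \<in> lay E (CE (h + 1)) 0 (\<lambda>v. even (col v)) \<union> lay E (CE (h + 1)) 1 (\<lambda>v. odd (col v))"
proof -
  note F = evC1[OF x y j n]
  have evK: "even (n * (2 * h + 2))" by simp
  show ?thesis
  proof (cases "even n")
    case en: True
    show ?thesis
    proof (cases "even j")
      case True
      have "{x, y} \<in> lay E (CE (h + 1)) 0 (\<lambda>v. even (col v))"
        by (rule lay_mem'[OF e]) (use F en True cx cy evK in auto)
      then show ?thesis by blast
    next
      case False
      have "{x, y} \<in> lay E (CE h) 1 (\<lambda>v. even (col v))"
        by (rule lay_mem[OF e]) (use F en False cx cy evK in auto)
      then show ?thesis by blast
    qed
  next
    case on: False
    show ?thesis
    proof (cases "even j")
      case True
      have "{x, y} \<in> lay E (CE h) 0 (\<lambda>v. odd (col v))"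
        by (rule lay_mem'[OF e]) (use F on True cx cy evK in auto)
      then show ?thesis by blast
    next
      case False
      have "{x, y} \<in> lay E (CE (h + 1)) 1 (\<lambda>v. odd (col v))"
        by (rule lay_mem[OF e]) (use F on False cx cy evK in auto)
      then show ?thesis by blast
    qed
  qed
qed

lemma memC1_0:
  assumes x: "mid x = posE (2 * h + 2) n j" and y: "mid y = posE (2 * h + 2) n (Suc j)"
    and j: "Suc j < 2 * h + 2" and n: "n < N" and e: "{x, y} \<in> E" and h0: "h = 0"
  shows "{x, y} \<in> lay E (CE 0) 0 (\<lambda>_. True)"
proof -
  note F = evC1[OF x y j n]
  have j0: "j = 0" using j h0 by simp
  have evK: "even (n * (2 * h + 2))" by simp
  show ?thesis
  proof (cases "even n")
    case True
    show ?thesis by (rule lay_mem[OF e]) (use F True evK j0 h0 in auto)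
  next
    case False
    show ?thesis by (rule lay_mem'[OF e]) (use F False evK j0 h0 in auto)
  qed
qed

lemma memC3:
  assumes x: "mid x = posE (2 * h + 2) n j" and y: "mid y = posE (2 * h + 2) n (j + 3)"
    and j: "j + 3 < 2 * h + 2" "even j" and n: "n < N" and cx: "col x = n" and cy: "col y = n"
    and e: "{x, y} \<in> E"
  shows "{x, y} \<in> lay E (CE (h + 1)) 1 (\<lambda>v. even (col v)) \<or> {x, y} \<in> lay E (CE h) 1 (\<lambda>v. odd (col v))"
proof -
  note F = evC3[OF x y j n]
  have evK: "even (n * (2 * h + 2))" by simp
  show ?thesis
  proof (cases "even n")
    case True
    have "{x, y} \<in> lay E (CE (h + 1)) 1 (\<lambda>v. even (col v))"
      by (rule lay_mem[OF e]) (use F True cx cy evK j in auto)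
    then show ?thesis by blast
  next
    case False
    have "{x, y} \<in> lay E (CE h) 1 (\<lambda>v. odd (col v))"
      by (rule lay_mem[OF e]) (use F False cx cy evK j in auto)
    then show ?thesis by blast
  qed
qed

lemma memH:
  assumes x: "mid x = posE (2 * h + 2) n j" and y: "mid y = posE (2 * h + 2) (Suc n) j"
    and j: "j < 2 * h + 2" and n: "Suc n < N" and e: "{x, y} \<in> E"
  shows "{x, y} \<in> lay E (CE 0) (h + 1) (\<lambda>_. True) \<or> {x, y} \<in> lay E (CE (2 * h + 1)) (h + 1) (\<lambda>_. True)"
proof -
  note F = evH[OF x y j n]
  show ?thesis
  proof (rule disjE[OF F])
    assume "CE 0 x + 1 = CE 0 y \<and> even (CE 0 x + (h + 1))"
    then have "{x, y} \<in> lay E (CE 0) (h + 1) (\<lambda>_. True)" by (intro lay_mem[OF e]) auto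
    then show ?thesis by blast
  next
    assume "CE (2 * h + 1) x + 1 = CE (2 * h + 1) y \<and> even (CE (2 * h + 1) x + (h + 1))"
    then have "{x, y} \<in> lay E (CE (2 * h + 1)) (h + 1) (\<lambda>_. True)" by (intro lay_mem[OF e]) auto
    then show ?thesis by blast
  qed
qed

end

definition jj :: "nat \<Rightarrow> nat \<Rightarrow> nat" where
  "jj a m = 2 * m + (if even m then a else 1 - a)"

definition midS :: "nat \<Rightarrow> nat \<times> nat \<times> nat \<Rightarrow> nat" where
  "midS h = (\<lambda>(a, m, n). posE (2 * h + 2) n (jj a m))"

abbreviation "CS h N \<equiv> config (pi0 ((2 * h + 2) * N) h (2 * h + 1) (midS h)) (bricks ((2 * h + 2) * N) h (2 * h + 1))"

lemma grid3_EV: "\<forall>e\<in>grid3_E A M N. e \<subseteq> grid3_V A M N"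
  unfolding grid3_E_def grid3_V_def by auto

lemma grid3_E_cases:
  assumes "e \<in> grid3_E A M N"
  obtains a m n where "e = {(a, m, n), (Suc a, m, n)}" "Suc a < A" "m < M" "n < N"
    | a m n where "e = {(a, m, n), (a, Suc m, n)}" "a < A" "Suc m < M" "n < N"
    | a m n where "e = {(a, m, n), (a, m, Suc n)}" "a < A" "m < M" "Suc n < N"
  using assms unfolding grid3_E_def by auto

lemma jj_div: "a < 2 \<Longrightarrow> jj a m div 2 = m"
  unfolding jj_def by (cases "even m") auto
lemma jj_mod: "a < 2 \<Longrightarrow> jj a m mod 2 = (if even m then a else 1 - a)"
proof -
  assume "a < 2"
  then have "a = 0 \<or> a = 1" by auto
  then show ?thesis unfolding jj_def by (cases "even m") auto
qed
lemma jj_inv: "jj (if even (j div 2) then j mod 2 else 1 - j mod 2) (j div 2) = j"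
proof -
  have r: "j mod 2 < 2" by simp
  have "2 * (j div 2) + j mod 2 = j" by simp
  then show ?thesis unfolding jj_def using r by (cases "even (j div 2)") auto
qed
lemma jj_lt: "a < 2 \<Longrightarrow> m < M \<Longrightarrow> jj a m < 2 * M"
  unfolding jj_def by (cases "even m") auto
lemma bij_jj: "bij_betw (\<lambda>(a, m, n). (jj a m, n)) (grid3_V 2 M N) ({0..<2 * M} \<times> {0..<N})"
proof (rule bij_betw_byWitness[where f'="\<lambda>(j, n). (if even (j div 2) then j mod 2 else 1 - j mod 2, j div 2, n)"])
  show "\<forall>a\<in>grid3_V 2 M N. (\<lambda>(j, n). (if even (j div 2) then j mod 2 else 1 - j mod 2, j div 2, n)) ((\<lambda>(a, m, n). (jj a m, n)) a) = a"
  proof (rule ballI)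
    fix v assume "v \<in> grid3_V 2 M N"
    then obtain a m n where v: "v = (a, m, n)" "a < 2" by (cases v) auto
    have d: "jj a m div 2 = m" using jj_div[OF v(2)] .
    have md: "jj a m mod 2 = (if even m then a else 1 - a)" using jj_mod[OF v(2)] .
    have "(if even m then (if even m then a else 1 - a) else 1 - (if even m then a else 1 - a)) = a"
      using v(2) by auto
    then show "(\<lambda>(j, n). (if even (j div 2) then j mod 2 else 1 - j mod 2, j div 2, n)) ((\<lambda>(a, m, n). (jj a m, n)) v) = v"
      unfolding v(1) by (simp only: prod.case d md)
  qed
  show "\<forall>a'\<in>{0..<2 * M} \<times> {0..<N}. (\<lambda>(a, m, n). (jj a m, n)) ((\<lambda>(j, n). (if even (j div 2) then j mod 2 else 1 - j mod 2, j div 2, n)) a') = a'"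
    using jj_inv by auto
  show "(\<lambda>(a, m, n). (jj a m, n)) ` grid3_V 2 M N \<subseteq> {0..<2 * M} \<times> {0..<N}"
    using jj_lt by auto
  show "(\<lambda>(j, n). (if even (j div 2) then j mod 2 else 1 - j mod 2, j div 2, n)) ` ({0..<2 * M} \<times> {0..<N}) \<subseteq> grid3_V 2 M N"
    by (auto simp: less_mult_imp_div_less)
qed

lemma bij_midS: "bij_betw (midS h) (grid3_V 2 (Suc h) N) {0..<(2 * h + 2) * N}"
proof -
  have b1: "bij_betw (\<lambda>(a, m, n). (jj a m, n)) (grid3_V 2 (Suc h) N) ({0..<2 * h + 2} \<times> {0..<N})"
    using bij_jj[of "Suc h" N] by simp
  have b2: "bij_betw (\<lambda>(j, n). posE (2 * h + 2) n j) ({0..<2 * h + 2} \<times> {0..<N}) {0..<(2 * h + 2) * N}"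
    by (rule bij_posE) auto
  have b: "bij_betw ((\<lambda>(j, n). posE (2 * h + 2) n j) \<circ> (\<lambda>(a, m, n). (jj a m, n))) (grid3_V 2 (Suc h) N) {0..<(2 * h + 2) * N}"
    by (rule bij_betw_trans[OF b1 b2])
  have eq: "((\<lambda>(j, n). posE (2 * h + 2) n j) \<circ> (\<lambda>(a, m, n). (jj a m, n))) v = midS h v" for v
    by (cases v) (simp add: midS_def)
  show ?thesis using b unfolding eq[abs_def] by simp
qed

definition IsS :: "nat \<Rightarrow> nat \<Rightarrow> (nat \<times> (nat \<times> nat \<times> nat) set set) list" where
  "IsS h N = (let E = grid3_E 2 (Suc h) N; C = CS h N;
      EC = (\<lambda>v::nat \<times> nat \<times> nat. even (snd (snd v))); OC = (\<lambda>v::nat \<times> nat \<times> nat. odd (snd (snd v))) in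
    [(h, lay E (C h) 1 EC \<union> lay E (C h) 0 OC),
     (h + 1, lay E (C (h + 1)) 0 EC \<union> lay E (C (h + 1)) 1 OC),
     (h, lay E (C h) 1 OC),
     (h + 1, lay E (C (h + 1)) 1 EC),
     (0, lay E (C 0) (h + 1) (\<lambda>_. True)),
     (2 * h + 1, lay E (C (2 * h + 1)) (h + 1) (\<lambda>_. True))])"

lemma spin_cover:
  assumes e: "e \<in> grid3_E 2 (Suc h) N"
  shows "\<exists>(t, I)\<in>set (IsS h N). e \<in> I"
proof -
  let ?E = "grid3_E 2 (Suc h) N" and ?C = "CS h N"
  let ?EC = "\<lambda>v::nat \<times> nat \<times> nat. even (snd (snd v))" and ?OC = "\<lambda>v::nat \<times> nat \<times> nat. odd (snd (snd v))"
  let ?LA = "lay ?E (?C h) 1 ?EC \<union> lay ?E (?C h) 0 ?OC"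
  let ?LB = "lay ?E (?C (h + 1)) 0 ?EC \<union> lay ?E (?C (h + 1)) 1 ?OC"
  let ?LE = "lay ?E (?C h) 1 ?OC" and ?LF = "lay ?E (?C (h + 1)) 1 ?EC"
  let ?LC = "lay ?E (?C 0) (h + 1) (\<lambda>_. True)" and ?LD = "lay ?E (?C (2 * h + 1)) (h + 1) (\<lambda>_. True)"
  have S: "set (IsS h N) = {(h, ?LA), (h + 1, ?LB), (h, ?LE), (h + 1, ?LF), (0, ?LC), (2 * h + 1, ?LD)}"
    by (simp add: IsS_def Let_def)
  have goal: "e \<in> ?LA \<or> e \<in> ?LB \<or> e \<in> ?LE \<or> e \<in> ?LF \<or> e \<in> ?LC \<or> e \<in> ?LD"
    using e
  proof (cases rule: grid3_E_cases)
    case (1 a m n)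
    then have a0: "a = 0" by simp
    show ?thesis
    proof (cases "even m")
      case True
      have "{(0, m, n), (1, m, n)} \<in> ?LA \<or> {(0, m, n), (1, m, n)} \<in> ?LB"
        by (rule memC1[where j="2 * m"]) (use 1 a0 True e in \<open>auto simp: midS_def jj_def\<close>)
      then show ?thesis using 1 a0 by auto
    next
      case False
      have "{(1, m, n), (0, m, n)} \<in> ?LA \<or> {(1, m, n), (0, m, n)} \<in> ?LB"
        by (rule memC1[where j="2 * m"]) (use 1 a0 False e in \<open>auto simp: midS_def jj_def insert_commute\<close>)
      then show ?thesis using 1 a0 by (auto simp: insert_commute)
    qed
  next
    case (2 a m n)
    have a01: "a = 0 \<or> a = 1" using 2 by auto
    show ?thesis
    proof (cases "(even m \<and> a = 0) \<or> (odd m \<and> a = 1)")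
      case True
      have "e \<in> ?LF \<or> e \<in> ?LE"
        unfolding 2(1) by (rule memC3[where j="2 * m"]) (use 2 True e in \<open>auto simp: midS_def jj_def numeral_3_eq_3\<close>)
      then show ?thesis by blast
    next
      case False
      then have "(even m \<and> a = 1) \<or> (odd m \<and> a = 0)" using a01 by auto
      have "e \<in> ?LA \<or> e \<in> ?LB"
        unfolding 2(1) by (rule memC1[where j="2 * m + 1"]) (use 2 \<open>(even m \<and> a = 1) \<or> (odd m \<and> a = 0)\<close> e in \<open>auto simp: midS_def jj_def\<close>)
      then show ?thesis by blast
    qed
  next
    case (3 a m n)
    have "e \<in> ?LC \<or> e \<in> ?LD"
      unfolding 3(1) by (rule memH[where j="jj a m"]) (use 3 e in \<open>auto simp: midS_def jj_def\<close>)
    then show ?thesis by blast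
  qed
  then show ?thesis
  proof (elim disjE)
    assume "e \<in> ?LA" then show ?thesis unfolding S by (intro bexI[of _ "(h, ?LA)"]) simp_all
  next
    assume "e \<in> ?LB" then show ?thesis unfolding S by (intro bexI[of _ "(h + 1, ?LB)"]) simp_all
  next
    assume "e \<in> ?LE" then show ?thesis unfolding S by (intro bexI[of _ "(h, ?LE)"]) simp_all
  next
    assume "e \<in> ?LF" then show ?thesis unfolding S by (intro bexI[of _ "(h + 1, ?LF)"]) simp_all
  next
    assume "e \<in> ?LC" then show ?thesis unfolding S by (intro bexI[of _ "(0, ?LC)"]) simp_all
  next
    assume "e \<in> ?LD" then show ?thesis unfolding S by (intro bexI[of _ "(2 * h + 1, ?LD)"]) simp_all
  qed
qed

lemma ok2:
  assumes bij: "bij_betw mid V {0..<n}" and EV: "\<forall>e\<in>E. e \<subseteq> V" and t: "t \<le> d"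
    and PP: "\<forall>v. \<not> (P1 v \<and> P2 v)"
  shows "t \<le> d \<and> interaction_layer E (config (pi0 n h1 d mid) (bricks n h1 d) t)
     (lay E (config (pi0 n h1 d mid) (bricks n h1 d) t) r1 P1 \<union> lay E (config (pi0 n h1 d mid) (bricks n h1 d) t) r2 P2)"
  using lay_il[OF cfg_inj[OF bij] EV PP] t by blast

lemma ok1:
  assumes bij: "bij_betw mid V {0..<n}" and EV: "\<forall>e\<in>E. e \<subseteq> V" and t: "t \<le> d"
  shows "t \<le> d \<and> interaction_layer E (config (pi0 n h1 d mid) (bricks n h1 d) t)
     (lay E (config (pi0 n h1 d mid) (bricks n h1 d) t) r P)"
  using lay_il1[OF cfg_inj[OF bij] EV] t by blast

lemma spin_net:
  "swap_network (grid3_V 2 (Suc h) N) (grid3_E 2 (Suc h) N)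
     (pi0 ((2 * h + 2) * N) h (2 * h + 1) (midS h)) (bricks ((2 * h + 2) * N) h (2 * h + 1)) (IsS h N)"
proof (rule net_valid[OF bij_midS])
  show "card (grid3_V 2 (Suc h) N) = (2 * h + 2) * N" by (simp add: grid3_V_card)
  show "h \<le> 2 * h + 1" by simp
  show "\<forall>e\<in>grid3_E 2 (Suc h) N. \<exists>(t, I)\<in>set (IsS h N). e \<in> I" using spin_cover by blast
  have PP: "\<forall>v::nat \<times> nat \<times> nat. \<not> (even (snd (snd v)) \<and> odd (snd (snd v)))" by simp
  have PP': "\<forall>v::nat \<times> nat \<times> nat. \<not> (odd (snd (snd v)) \<and> False)" by simp
  note b = bij_midS[of h N] and ev = grid3_EV[of 2 "Suc h" N]
  show "\<forall>(t, I)\<in>set (IsS h N). t \<le> 2 * h + 1 \<and> interaction_layer (grid3_E 2 (Suc h) N) (CS h N t) I"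
    unfolding IsS_def Let_def
    using ok2[OF b ev _ PP] ok1[OF b ev] by (simp del: config_0)
qed

lemma length_IsS: "length (IsS h N) = 6"
  unfolding IsS_def Let_def by simp

lemma spin_lower:
  assumes net: "swap_network (grid3_V 2 M N) (grid3_E 2 M N) \<pi>0 Ls Is" and M: "2 \<le> M" "M \<le> N"
  shows "2 * M \<le> length Ls + 1"
proof -
  have f: "bij_betw \<pi>0 (grid3_V 2 M N) {0..<card (grid3_V 2 M N)}"
    using net unfolding swap_network_def by blast
  obtain k where k: "2 * M \<le> card (bd3 M N \<pi>0 k)" using iso3[OF M f] by blast
  have "card (bd3 M N \<pi>0 k) \<le> length Ls + 1"
    using lower_bound[OF net grid3_V_fin, of k] unfolding bd_def .
  then show ?thesis using k by linarith
qed

lemma spinless_lower: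
  assumes net: "swap_network (grid2_V M N) (grid2_E M N) \<pi>0 Ls Is" and M: "1 \<le> M" "M \<le> N"
  shows "M - 1 \<le> length Ls"
proof (cases "M = 1")
  case True then show ?thesis by simp
next
  case False
  then have M2: "2 \<le> M" using M by simp
  have f: "bij_betw \<pi>0 (grid2_V M N) {0..<card (grid2_V M N)}"
    using net unfolding swap_network_def by blast
  obtain k where k: "M \<le> card (bd (grid2_V M N) (grid2_E M N) \<pi>0 k)" using iso2[OF M2 M(2) f] by blast
  have "card (bd (grid2_V M N) (grid2_E M N) \<pi>0 k) \<le> length Ls + 1"
    using lower_bound[OF net grid2_V_fin, of k] unfolding bd_def .
  then show ?thesis using k by linarith
qed

lemma bij_midO: "0 < M \<Longrightarrow> bij_betw (midO M) (grid2_V M N) {0..<M * N}"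
  unfolding midO_def grid2_V_eq by (rule bij_lin)

definition IsO :: "nat \<Rightarrow> nat \<Rightarrow> (nat \<times> (nat \<times> nat) set set) list" where
  "IsO M N = (let E = grid2_E M N; C = CO M N; h = M div 2 in
    [(0, lay E (C 0) (h + 1) (\<lambda>_. True)), (h, lay E (C h) 0 (\<lambda>_. True)),
     (h, lay E (C h) 1 (\<lambda>_. True)), (2 * h, lay E (C (2 * h)) h (\<lambda>_. True))])"

lemma odd_net:
  assumes M: "odd M"
  shows "swap_network (grid2_V M N) (grid2_E M N) (pi0 (M * N) (M div 2) (2 * (M div 2)) (midO M))
           (bricks (M * N) (M div 2) (2 * (M div 2))) (IsO M N)"
proof (rule net_valid[OF bij_midO])
  show "0 < M" using M by (rule odd_pos)
  show "card (grid2_V M N) = M * N" by (rule grid2_V_card)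
  show "M div 2 \<le> 2 * (M div 2)" by simp
  show "\<forall>e\<in>grid2_E M N. \<exists>(t, I)\<in>set (IsO M N). e \<in> I"
  proof
    fix e assume e: "e \<in> grid2_E M N"
    show "\<exists>(t, I)\<in>set (IsO M N). e \<in> I"
      using odd_cover[OF M e] unfolding IsO_def Let_def by auto
  qed
  note b = bij_midO[OF odd_pos[OF M], of N] and ev = grid2_EV[of M N]
  show "\<forall>(t, I)\<in>set (IsO M N). t \<le> 2 * (M div 2) \<and> interaction_layer (grid2_E M N) (CO M N t) I"
    unfolding IsO_def Let_def using ok1[OF b ev] by (simp del: config_0)
qed

definition Is1 :: "nat \<Rightarrow> (nat \<times> (nat \<times> nat) set set) list" where
  "Is1 N = (let E = grid2_E 1 N; C = CO 1 N in
    if N \<le> 1 then [] else if N = 2 then [(0, lay E (C 0) 0 (\<lambda>_. True))]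
    else [(0, lay E (C 0) 0 (\<lambda>_. True)), (0, lay E (C 0) 1 (\<lambda>_. True))])"

lemma grid2_E_1_small: "N \<le> 1 \<Longrightarrow> grid2_E 1 N = {}"
  unfolding grid2_E_def by auto

lemma grid2_E_12: "grid2_E 1 2 = {{(0, 0), (0, 1)}}"
  unfolding grid2_E_def by auto

lemma one_net:
  "swap_network (grid2_V 1 N) (grid2_E 1 N) (pi0 (1 * N) (1 div 2) (2 * (1 div 2)) (midO 1))
           (bricks (1 * N) (1 div 2) (2 * (1 div 2))) (Is1 N)"
proof (rule net_valid[OF bij_midO])
  show "0 < (1::nat)" by simp
  show "card (grid2_V 1 N) = 1 * N" by (rule grid2_V_card)
  show "(1::nat) div 2 \<le> 2 * (1 div 2)" by simp
  have c0: "CO 1 N 0 = midO 1" using cfg_mid[of "1 div 2" "2 * (1 div 2)" "1 * N" "midO 1"] by simp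
  show "\<forall>e\<in>grid2_E 1 N. \<exists>(t, I)\<in>set (Is1 N). e \<in> I"
  proof
    fix e assume e: "e \<in> grid2_E 1 N"
    show "\<exists>(t, I)\<in>set (Is1 N). e \<in> I"
    proof (cases "N \<le> 1")
      case True then show ?thesis using e grid2_E_1_small by simp
    next
      case N: False
      show ?thesis
      proof (cases "N = 2")
        case True
        then have e': "e = {(0, 0), (0, 1)}" using e grid2_E_12 by simp
        have "e \<in> lay (grid2_E 1 N) (CO 1 N 0) 0 (\<lambda>_. True)"
          unfolding e' by (rule lay_mem) (use True grid2_E_12 c0 in \<open>simp_all add: midO_def\<close>)
        then show ?thesis unfolding Is1_def Let_def using True by auto
      next
        case False
        have "e \<in> lay (grid2_E 1 N) (CO 1 N 0) (0 + 1) (\<lambda>_. True) \<or> e \<in> lay (grid2_E 1 N) (CO 1 N 0) 0 (\<lambda>_. True) \<or>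
              e \<in> lay (grid2_E 1 N) (CO 1 N 0) 1 (\<lambda>_. True) \<or> e \<in> lay (grid2_E 1 N) (CO 1 N (2 * 0)) 0 (\<lambda>_. True)"
          using odd_cover[of 1 e N] e by simp
        then show ?thesis unfolding Is1_def Let_def using N False by auto
      qed
    qed
  qed
  note b = bij_midO[of 1 N] and ev = grid2_EV[of 1 N]
  show "\<forall>(t, I)\<in>set (Is1 N). t \<le> 2 * (1 div 2) \<and> interaction_layer (grid2_E 1 N) (CO 1 N t) I"
    unfolding Is1_def Let_def using ok1[OF b ev] ok1[OF bij_midO[of 1 2] grid2_EV[of 1 2]] by (simp del: config_0)
qed

definition midE :: "nat \<Rightarrow> nat \<times> nat \<Rightarrow> nat" where
  "midE h = (\<lambda>(m, n). posE (2 * h + 2) n m)"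

abbreviation "CEv h N \<equiv> config (pi0 ((2 * h + 2) * N) h (2 * h + 1) (midE h)) (bricks ((2 * h + 2) * N) h (2 * h + 1))"

lemma bij_midE: "bij_betw (midE h) (grid2_V (2 * h + 2) N) {0..<(2 * h + 2) * N}"
  unfolding midE_def grid2_V_eq by (rule bij_posE) auto

definition IsE :: "nat \<Rightarrow> nat \<Rightarrow> (nat \<times> (nat \<times> nat) set set) list" where
  "IsE h N = (let E = grid2_E (2 * h + 2) N; C = CEv h N;
      EC = (\<lambda>v::nat \<times> nat. even (snd v)); OC = (\<lambda>v::nat \<times> nat. odd (snd v)) in
    [(h, lay E (C h) 1 EC \<union> lay E (C h) 0 OC),
     (h + 1, lay E (C (h + 1)) 0 EC \<union> lay E (C (h + 1)) 1 OC),
     (0, lay E (C 0) (h + 1) (\<lambda>_. True)),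
     (2 * h + 1, lay E (C (2 * h + 1)) (h + 1) (\<lambda>_. True))])"

definition IsE0 :: "nat \<Rightarrow> (nat \<times> (nat \<times> nat) set set) list" where
  "IsE0 N = (let E = grid2_E 2 N; C = CEv 0 N in
    [(0, lay E (C 0) 0 (\<lambda>_. True)), (0, lay E (C 0) 1 (\<lambda>_. True)), (1, lay E (C 1) 1 (\<lambda>_. True))])"

lemma even_cover:
  assumes e: "e \<in> grid2_E (2 * h + 2) N"
  shows "\<exists>(t, I)\<in>set (IsE h N). e \<in> I"
proof -
  let ?E = "grid2_E (2 * h + 2) N" and ?C = "CEv h N"
  let ?EC = "\<lambda>v::nat \<times> nat. even (snd v)" and ?OC = "\<lambda>v::nat \<times> nat. odd (snd v)"
  let ?LA = "lay ?E (?C h) 1 ?EC \<union> lay ?E (?C h) 0 ?OC"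
  let ?LB = "lay ?E (?C (h + 1)) 0 ?EC \<union> lay ?E (?C (h + 1)) 1 ?OC"
  let ?LC = "lay ?E (?C 0) (h + 1) (\<lambda>_. True)" and ?LD = "lay ?E (?C (2 * h + 1)) (h + 1) (\<lambda>_. True)"
  have S: "set (IsE h N) = {(h, ?LA), (h + 1, ?LB), (0, ?LC), (2 * h + 1, ?LD)}"
    by (simp add: IsE_def Let_def)
  have goal: "e \<in> ?LA \<or> e \<in> ?LB \<or> e \<in> ?LC \<or> e \<in> ?LD"
    using e
  proof (cases rule: grid2_E_cases)
    case (1 m n)
    have "e \<in> ?LA \<or> e \<in> ?LB"
      unfolding 1(1) by (rule memC1[where j=m]) (use 1 e in \<open>auto simp: midE_def\<close>)
    then show ?thesis by blast
  next
    case (2 m n)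
    have "e \<in> ?LC \<or> e \<in> ?LD"
      unfolding 2(1) by (rule memH[where j=m]) (use 2 e in \<open>auto simp: midE_def\<close>)
    then show ?thesis by blast
  qed
  then show ?thesis
  proof (elim disjE)
    assume "e \<in> ?LA" then show ?thesis unfolding S by (intro bexI[of _ "(h, ?LA)"]) simp_all
  next
    assume "e \<in> ?LB" then show ?thesis unfolding S by (intro bexI[of _ "(h + 1, ?LB)"]) simp_all
  next
    assume "e \<in> ?LC" then show ?thesis unfolding S by (intro bexI[of _ "(0, ?LC)"]) simp_all
  next
    assume "e \<in> ?LD" then show ?thesis unfolding S by (intro bexI[of _ "(2 * h + 1, ?LD)"]) simp_all
  qed
qed

lemma even_net:
  "swap_network (grid2_V (2 * h + 2) N) (grid2_E (2 * h + 2) N)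
     (pi0 ((2 * h + 2) * N) h (2 * h + 1) (midE h)) (bricks ((2 * h + 2) * N) h (2 * h + 1)) (IsE h N)"
proof (rule net_valid[OF bij_midE])
  show "card (grid2_V (2 * h + 2) N) = (2 * h + 2) * N" by (rule grid2_V_card)
  show "h \<le> 2 * h + 1" by simp
  show "\<forall>e\<in>grid2_E (2 * h + 2) N. \<exists>(t, I)\<in>set (IsE h N). e \<in> I" using even_cover by blast
  have PP: "\<forall>v::nat \<times> nat. \<not> (even (snd v) \<and> odd (snd v))" by simp
  note b = bij_midE[of h N] and ev = grid2_EV[of "2 * h + 2" N]
  show "\<forall>(t, I)\<in>set (IsE h N). t \<le> 2 * h + 1 \<and> interaction_layer (grid2_E (2 * h + 2) N) (CEv h N t) I"
    unfolding IsE_def Let_def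
    using ok2[OF b ev _ PP] ok1[OF b ev] by (simp del: config_0)
qed

lemma even0_cover:
  assumes e: "e \<in> grid2_E 2 N"
  shows "\<exists>(t, I)\<in>set (IsE0 N). e \<in> I"
proof -
  let ?E = "grid2_E 2 N" and ?C = "CEv 0 N"
  let ?L1 = "lay ?E (?C 0) 0 (\<lambda>_. True)" and ?L2 = "lay ?E (?C 0) 1 (\<lambda>_. True)"
    and ?L3 = "lay ?E (?C 1) 1 (\<lambda>_. True)"
  have S: "set (IsE0 N) = {(0, ?L1), (0, ?L2), (1, ?L3)}"
    by (simp add: IsE0_def Let_def)
  have goal: "e \<in> ?L1 \<or> e \<in> ?L2 \<or> e \<in> ?L3"
    using e
  proof (cases rule: grid2_E_cases)
    case (1 m n)
    have "e \<in> ?L1"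
      unfolding 1(1) by (rule memC1_0[where j=m and h=0]) (use 1 e in \<open>auto simp: midE_def\<close>)
    then show ?thesis by blast
  next
    case (2 m n)
    have "e \<in> lay ?E (?C 0) (0 + 1) (\<lambda>_. True) \<or> e \<in> lay ?E (?C (2 * 0 + 1)) (0 + 1) (\<lambda>_. True)"
      unfolding 2(1) by (rule memH[where j=m and h=0]) (use 2 e in \<open>auto simp: midE_def\<close>)
    then show ?thesis by simp
  qed
  then show ?thesis
  proof (elim disjE)
    assume "e \<in> ?L1" then show ?thesis unfolding S by (intro bexI[of _ "(0, ?L1)"]) simp_all
  next
    assume "e \<in> ?L2" then show ?thesis unfolding S by (intro bexI[of _ "(0, ?L2)"]) simp_all
  next
    assume "e \<in> ?L3" then show ?thesis unfolding S by (intro bexI[of _ "(1, ?L3)"]) simp_all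
  qed
qed

lemma even0_net:
  "swap_network (grid2_V 2 N) (grid2_E 2 N)
     (pi0 ((2 * 0 + 2) * N) 0 (2 * 0 + 1) (midE 0)) (bricks ((2 * 0 + 2) * N) 0 (2 * 0 + 1)) (IsE0 N)"
proof (rule net_valid)
  show "bij_betw (midE 0) (grid2_V 2 N) {0..<(2 * 0 + 2) * N}" using bij_midE[of 0 N] by (simp only: mult_0_right add_0)
  show "card (grid2_V 2 N) = (2 * 0 + 2) * N" by (simp add: grid2_V_card)
  show "(0::nat) \<le> 2 * 0 + 1" by simp
  show "\<forall>e\<in>grid2_E 2 N. \<exists>(t, I)\<in>set (IsE0 N). e \<in> I" using even0_cover by blast
  have b: "bij_betw (midE 0) (grid2_V 2 N) {0..<(2 * 0 + 2) * N}" using bij_midE[of 0 N] by (simp only: mult_0_right add_0)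
  note ev = grid2_EV[of 2 N]
  show "\<forall>(t, I)\<in>set (IsE0 N). t \<le> 2 * 0 + 1 \<and> interaction_layer (grid2_E 2 N) (CEv 0 N t) I"
    unfolding IsE0_def Let_def
    using ok1[OF b ev] by (simp del: config_0)
qed

definition Is22 :: "(nat \<times> (nat \<times> nat) set set) list" where
  "Is22 = [(0, lay (grid2_E 2 2) (config (midO 2) [{1}] 0) 0 (\<lambda>_. True)),
           (1, lay (grid2_E 2 2) (config (midO 2) [{1}] 1) 0 (\<lambda>_. True))]"

lemma net22: "swap_network (grid2_V 2 2) (grid2_E 2 2) (midO 2) [{1}] Is22"
proof -
  have b: "bij_betw (midO 2) (grid2_V 2 2) {0..<card (grid2_V 2 2)}"
    using bij_midO[of 2 2] by (simp add: grid2_V_card)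
  have sl: "\<forall>L\<in>set [{1::nat}]. swap_layer (card (grid2_V 2 2)) L"
    by (simp add: swap_layer_def grid2_V_card)
  have inj: "inj_on (config (midO 2) [{1}] t) (grid2_V 2 2)" for t
    using config_bij[OF sl b] by (rule bij_betw_imp_inj_on)
  note ev = grid2_EV[of 2 2]
  have c0: "config (midO 2) [{1}] 0 = midO 2" by simp
  have c1: "config (midO 2) [{1}] 1 v = swap_pos {1} (midO 2 v)" for v
    using config_Suc'[of 0 "[{1}]" "midO 2" v] by simp
  let ?L0 = "lay (grid2_E 2 2) (config (midO 2) [{1}] 0) 0 (\<lambda>_. True)"
  let ?L1 = "lay (grid2_E 2 2) (config (midO 2) [{1}] 1) 0 (\<lambda>_. True)"
  have S: "set Is22 = {(0, ?L0), (1, ?L1)}" unfolding Is22_def by simp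
  have cover: "\<exists>(t, I)\<in>set Is22. e \<in> I" if e: "e \<in> grid2_E 2 2" for e
    using e
  proof (cases rule: grid2_E_cases)
    case (1 m n)
    then have m0: "m = 0" by simp
    have p: "midO 2 (m, n) + 1 = midO 2 (Suc m, n)" "even (midO 2 (m, n) + 0)"
      unfolding midO_def using m0 by simp_all
    have "e \<in> ?L0"
      unfolding 1(1) apply (rule lay_mem) using e 1 p by (simp_all add: c0)
    then show ?thesis unfolding S by (intro bexI[of _ "(0, ?L0)"]) simp_all
  next
    case (2 m n)
    then have n0: "n = 0" and m: "m = 0 \<or> m = 1" by auto
    have p: "swap_pos {1} (midO 2 (m, n)) + 1 = swap_pos {1} (midO 2 (m, Suc n)) \<and>
             even (swap_pos {1} (midO 2 (m, n)) + 0)"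
      using m n0 unfolding midO_def swap_pos_def by (elim disjE) simp_all
    have "e \<in> ?L1"
      unfolding 2(1) apply (rule lay_mem) apply (simp_all only: c1) using e 2 p by simp_all
    then show ?thesis unfolding S by (intro bexI[of _ "(1, ?L1)"]) simp_all
  qed
  show ?thesis unfolding swap_network_def
  proof (intro conjI)
    show "bij_betw (midO 2) (grid2_V 2 2) {0..<card (grid2_V 2 2)}" by (rule b)
    show "\<forall>L\<in>set [{1::nat}]. swap_layer (card (grid2_V 2 2)) L" by (rule sl)
    show "\<forall>(t, I)\<in>set Is22. t \<le> length [{1::nat}] \<and> interaction_layer (grid2_E 2 2) (config (midO 2) [{1}] t) I"
      unfolding Is22_def using lay_il1[OF inj ev] by (simp del: config_0)
    show "\<forall>e\<in>grid2_E 2 2. \<exists>(t, I)\<in>set Is22. e \<in> I" using cover by blast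
  qed
qed

lemma deg4:
  assumes net: "swap_network (grid2_V M N) (grid2_E M N) \<pi>0 Ls Is" and M: "3 \<le> M" "M \<le> N"
  shows "4 \<le> length Is"
proof -
  let ?F = "{{(0, 1), (1, 1)}, {(1, 1), (2, 1)}, {(1, 0), (1, 1)}, {(1, 1), (1, 2)}} :: (nat \<times> nat) set set"
  have "?F \<subseteq> grid2_E M N"
    using grid2_E_v[of 0 M 1 N] grid2_E_v[of 1 M 1 N] grid2_E_h[of 1 M 0 N] grid2_E_h[of 1 M 1 N] M
    by (simp add: numeral_2_eq_2)
  moreover have "card ?F = 4" by (simp add: doubleton_eq_iff)
  moreover have "\<forall>e\<in>?F. (1, 1) \<in> e" by simp
  ultimately show ?thesis using degree_bound[OF net, of ?F "(1, 1)"] by simp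
qed

lemma deg3:
  assumes net: "swap_network (grid2_V 2 N) (grid2_E 2 N) \<pi>0 Ls Is" and N: "3 \<le> N"
  shows "3 \<le> length Is"
proof -
  let ?F = "{{(0, 0), (0, 1)}, {(0, 1), (0, 2)}, {(0, 1), (1, 1)}} :: (nat \<times> nat) set set"
  have "?F \<subseteq> grid2_E 2 N"
    using grid2_E_h[of 0 2 0 N] grid2_E_h[of 0 2 1 N] grid2_E_v[of 0 2 1 N] N
    by (simp add: numeral_2_eq_2)
  moreover have "card ?F = 3" by (simp add: doubleton_eq_iff)
  moreover have "\<forall>e\<in>?F. (0, 1) \<in> e" by simp
  ultimately show ?thesis using degree_bound[OF net, of ?F "(0, 1)"] by simp
qed

lemma deg2a:
  assumes net: "swap_network (grid2_V 2 2) (grid2_E 2 2) \<pi>0 Ls Is"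
  shows "2 \<le> length Is"
proof -
  let ?F = "{{(0, 0), (1, 0)}, {(0, 0), (0, 1)}} :: (nat \<times> nat) set set"
  have "?F \<subseteq> grid2_E 2 2"
    using grid2_E_v[of 0 2 0 2] grid2_E_h[of 0 2 0 2] by simp
  moreover have "card ?F = 2" by (simp add: doubleton_eq_iff)
  moreover have "\<forall>e\<in>?F. (0, 0) \<in> e" by simp
  ultimately show ?thesis using degree_bound[OF net, of ?F "(0, 0)"] by simp
qed

lemma deg2b:
  assumes net: "swap_network (grid2_V 1 N) (grid2_E 1 N) \<pi>0 Ls Is" and N: "3 \<le> N"
  shows "2 \<le> length Is"
proof -
  let ?F = "{{(0, 0), (0, 1)}, {(0, 1), (0, 2)}} :: (nat \<times> nat) set set"
  have "?F \<subseteq> grid2_E 1 N"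
    using grid2_E_h[of 0 1 0 N] grid2_E_h[of 0 1 1 N] N by (simp add: numeral_2_eq_2)
  moreover have "card ?F = 2" by (simp add: doubleton_eq_iff)
  moreover have "\<forall>e\<in>?F. (0, 1) \<in> e" by simp
  ultimately show ?thesis using degree_bound[OF net, of ?F "(0, 1)"] by simp
qed

lemma deg1:
  assumes net: "swap_network (grid2_V 1 2) (grid2_E 1 2) \<pi>0 Ls Is"
  shows "1 \<le> length Is"
proof -
  let ?F = "{{(0, 0), (0, 1)}} :: (nat \<times> nat) set set"
  have "?F \<subseteq> grid2_E 1 2" using grid2_E_12 by simp
  moreover have "card ?F = 1" by simp
  moreover have "\<forall>e\<in>?F. (0, 0) \<in> e" by simp
  ultimately show ?thesis using degree_bound[OF net, of ?F "(0, 0)"] by simp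
qed

lemma spinless_main:
  assumes M: "1 \<le> M" "M \<le> N"
  shows "\<exists>\<pi>0 Ls Is. swap_network (grid2_V M N) (grid2_E M N) \<pi>0 Ls Is \<and> length Ls = M - 1 \<and>
           (\<forall>\<pi>0' Ls' Is'. swap_network (grid2_V M N) (grid2_E M N) \<pi>0' Ls' Is' \<longrightarrow> length Is \<le> length Is')"
proof (cases "M = 1")
  case True
  have net: "swap_network (grid2_V 1 N) (grid2_E 1 N) (pi0 (1 * N) (1 div 2) (2 * (1 div 2)) (midO 1))
           (bricks (1 * N) (1 div 2) (2 * (1 div 2))) (Is1 N)" by (rule one_net)
  have len: "length (Is1 N) = (if N \<le> 1 then 0 else if N = 2 then 1 else 2)"
    unfolding Is1_def Let_def by simp
  have low: "length (Is1 N) \<le> length Is'" if "swap_network (grid2_V 1 N) (grid2_E 1 N) \<pi>0' Ls' Is'" for \<pi>0' Ls' Is'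
  proof (cases "N \<le> 1")
    case True then show ?thesis using len by simp
  next
    case False
    show ?thesis
    proof (cases "N = 2")
      case True then show ?thesis using len deg1 that by simp
    next
      case False
      then have "3 \<le> N" using \<open>\<not> N \<le> 1\<close> by simp
      then show ?thesis using len deg2b[OF that] False \<open>\<not> N \<le> 1\<close> by simp
    qed
  qed
  show ?thesis using net low True by (intro exI[of _ "pi0 (1 * N) (1 div 2) (2 * (1 div 2)) (midO 1)"]
      exI[of _ "bricks (1 * N) (1 div 2) (2 * (1 div 2))"] exI[of _ "Is1 N"]) simp
next
  case M1: False
  show ?thesis
  proof (cases "odd M")
    case True
    then obtain k where k: "M = 2 * k + 1" by (rule oddE)
    then have M3: "3 \<le> M" using M M1 by (cases k) auto
    have net: "swap_network (grid2_V M N) (grid2_E M N) (pi0 (M * N) (M div 2) (2 * (M div 2)) (midO M))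
           (bricks (M * N) (M div 2) (2 * (M div 2))) (IsO M N)" by (rule odd_net[OF True])
    have len: "length (IsO M N) = 4" unfolding IsO_def Let_def by simp
    have d: "2 * (M div 2) = M - 1" using k by simp
    show ?thesis using net deg4[OF _ M3 M(2)] len d
      by (intro exI[of _ "pi0 (M * N) (M div 2) (2 * (M div 2)) (midO M)"]
      exI[of _ "bricks (M * N) (M div 2) (2 * (M div 2))"] exI[of _ "IsO M N"]) simp
  next
    case False
    then obtain k where k: "M = 2 * k" by (auto elim: evenE)
    then have "k \<noteq> 0" using M by auto
    define h where "h = k - 1"
    have h: "M = 2 * h + 2" using k \<open>k \<noteq> 0\<close> unfolding h_def by simp
    show ?thesis
    proof (cases "h = 0")
      case h0: True
      then have M2: "M = 2" using h by simp
      show ?thesis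
      proof (cases "N = 2")
        case True
        have len22: "length Is22 = 2" by (simp add: Is22_def)
        have opt: "\<forall>\<pi>0' Ls' Is'. swap_network (grid2_V 2 2) (grid2_E 2 2) \<pi>0' Ls' Is' \<longrightarrow> length Is22 \<le> length Is'"
          unfolding len22 using deg2a by blast
        show ?thesis using net22 opt M2 True
          by (intro exI[of _ "midO 2"] exI[of _ "[{1::nat}]"] exI[of _ Is22]) simp
      next
        case False
        then have N3: "3 \<le> N" using M M2 by simp
        have net: "swap_network (grid2_V 2 N) (grid2_E 2 N)
           (pi0 ((2 * 0 + 2) * N) 0 (2 * 0 + 1) (midE 0)) (bricks ((2 * 0 + 2) * N) 0 (2 * 0 + 1)) (IsE0 N)"
          by (rule even0_net)
        have len: "length (IsE0 N) = 3" unfolding IsE0_def Let_def by simp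
        show ?thesis using net deg3[OF _ N3] len M2
          by (intro exI[of _ "pi0 ((2 * 0 + 2) * N) 0 (2 * 0 + 1) (midE 0)"]
            exI[of _ "bricks ((2 * 0 + 2) * N) 0 (2 * 0 + 1)"] exI[of _ "IsE0 N"]) simp
      qed
    next
      case False
      then have M4: "3 \<le> M" using h by simp
      have net: "swap_network (grid2_V M N) (grid2_E M N)
         (pi0 ((2 * h + 2) * N) h (2 * h + 1) (midE h)) (bricks ((2 * h + 2) * N) h (2 * h + 1)) (IsE h N)"
        using even_net[of h N] h by simp
      have len: "length (IsE h N) = 4" unfolding IsE_def Let_def by simp
      show ?thesis using net deg4[OF _ M4 M(2)] len h
        by (intro exI[of _ "pi0 ((2 * h + 2) * N) h (2 * h + 1) (midE h)"]
          exI[of _ "bricks ((2 * h + 2) * N) h (2 * h + 1)"] exI[of _ "IsE h N"]) simp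
    qed
  qed
qed

theorem theorem1:
  shows "(\<forall>M N :: nat. 1 \<le> M \<and> M \<le> N \<longrightarrow>
            d_swap (grid2_V M N) (grid2_E M N) = M - 1 \<and>
            (\<exists>\<pi>0 Ls Is. swap_network (grid2_V M N) (grid2_E M N) \<pi>0 Ls Is \<and>
               length Ls = M - 1 \<and>
               length Is = min_interaction_depth (grid2_V M N) (grid2_E M N))) \<and>
         (\<forall>M N :: nat. 2 \<le> M \<and> M \<le> N \<longrightarrow>
            d_swap (grid3_V 2 M N) (grid3_E 2 M N) = 2 * M - 1 \<and>
            (\<exists>\<pi>0 Ls Is. swap_network (grid3_V 2 M N) (grid3_E 2 M N) \<pi>0 Ls Is \<and>
               length Ls = 2 * M - 1 \<and> length Is = 6))"
proof (intro conjI allI impI)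
  fix M N :: nat assume MN: "1 \<le> M \<and> M \<le> N"
  obtain \<pi>0 Ls Is where net: "swap_network (grid2_V M N) (grid2_E M N) \<pi>0 Ls Is" and len: "length Ls = M - 1"
    and opt: "\<forall>\<pi>0' Ls' Is'. swap_network (grid2_V M N) (grid2_E M N) \<pi>0' Ls' Is' \<longrightarrow> length Is \<le> length Is'"
    using spinless_main[of M N] MN by blast
  show "d_swap (grid2_V M N) (grid2_E M N) = M - 1"
    unfolding d_swap_def
  proof (rule Least_equality)
    show "\<exists>\<pi>0 Ls Is. swap_network (grid2_V M N) (grid2_E M N) \<pi>0 Ls Is \<and> length Ls = M - 1"
      using net len by blast
    fix y assume "\<exists>\<pi>0 Ls Is. swap_network (grid2_V M N) (grid2_E M N) \<pi>0 Ls Is \<and> length Ls = y"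
    then obtain \<pi>0' Ls' Is' where "swap_network (grid2_V M N) (grid2_E M N) \<pi>0' Ls' Is'" "length Ls' = y" by blast
    then show "M - 1 \<le> y" using spinless_lower[of M N \<pi>0' Ls' Is'] MN by simp
  qed
  have "min_interaction_depth (grid2_V M N) (grid2_E M N) = length Is"
    unfolding min_interaction_depth_def
  proof (rule Least_equality)
    show "\<exists>\<pi>0 Ls Is'. swap_network (grid2_V M N) (grid2_E M N) \<pi>0 Ls Is' \<and> length Is' = length Is"
      using net by blast
    fix y assume "\<exists>\<pi>0 Ls Is. swap_network (grid2_V M N) (grid2_E M N) \<pi>0 Ls Is \<and> length Is = y"
    then obtain \<pi>0' Ls' Is' where "swap_network (grid2_V M N) (grid2_E M N) \<pi>0' Ls' Is'" "length Is' = y" by blast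
    then show "length Is \<le> y" using opt by blast
  qed
  then show "\<exists>\<pi>0 Ls Is. swap_network (grid2_V M N) (grid2_E M N) \<pi>0 Ls Is \<and>
               length Ls = M - 1 \<and> length Is = min_interaction_depth (grid2_V M N) (grid2_E M N)"
    using net len by auto
next
  fix M N :: nat assume MN: "2 \<le> M \<and> M \<le> N"
  define h where "h = M - 1"
  have Mh: "M = Suc h" using MN unfolding h_def by simp
  have net: "swap_network (grid3_V 2 M N) (grid3_E 2 M N)
     (pi0 ((2 * h + 2) * N) h (2 * h + 1) (midS h)) (bricks ((2 * h + 2) * N) h (2 * h + 1)) (IsS h N)"
    using spin_net[of h N] Mh by simp
  have len: "length (bricks ((2 * h + 2) * N) h (2 * h + 1)) = 2 * M - 1" using Mh by simp
  show "d_swap (grid3_V 2 M N) (grid3_E 2 M N) = 2 * M - 1"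
    unfolding d_swap_def
  proof (rule Least_equality)
    show "\<exists>\<pi>0 Ls Is. swap_network (grid3_V 2 M N) (grid3_E 2 M N) \<pi>0 Ls Is \<and> length Ls = 2 * M - 1"
      using net len by blast
    fix y assume "\<exists>\<pi>0 Ls Is. swap_network (grid3_V 2 M N) (grid3_E 2 M N) \<pi>0 Ls Is \<and> length Ls = y"
    then obtain \<pi>0' Ls' Is' where "swap_network (grid3_V 2 M N) (grid3_E 2 M N) \<pi>0' Ls' Is'" "length Ls' = y" by blast
    then show "2 * M - 1 \<le> y" using spin_lower[of M N \<pi>0' Ls' Is'] MN by simp
  qed
  show "\<exists>\<pi>0 Ls Is. swap_network (grid3_V 2 M N) (grid3_E 2 M N) \<pi>0 Ls Is \<and>
               length Ls = 2 * M - 1 \<and> length Is = 6"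
    using net len length_IsS[of h N] by blast
qed

end
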